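(* $s_2s_1^3s_2^2s_1^2s_2^2\in u_1s_2u_1s_2s_1^3s_2u_1+u_1s_2^2s_1^3s_2s_1^{-1}s_2u_1+u_1u_2u_1u_2u_1+u_1^{\times}\omega^3\subset u_1^{\times}\omega^3+U''$.
   Context: Let $B_3=\langle s_1,s_2\mid s_1s_2s_1=s_2s_1s_2\rangle$, $R_5=\mathbb{Z}[a,b,c,d,e,e^{-1}]$, and let $H_5$ be the quotient of the group algebra $R_5B_3$ by the relations $s_i^5=as_i^4+bs_i^3+cs_i^2+ds_i+e$ for $i=1,2$; identify $s_i$ with their images. For $i=1,2$ let $u_i$ be the $R_5$-subalgebra of $H_5$ generated by $s_i$ and $u_i^\times$ its group of units. Set $\omega=s_2s_1^2s_2$. For $R_5$-submodules (or elements) $X_1,\dots,X_n$, $X_1\cdots X_n$ denotes the $R_5$-submodule spanned by products $x_1\cdots x_n$, $x_j\in X_j$; sums of submodules are as usual, and for a submodule $V$, $u_1^\times\omega^3+V$ denotes the set $\{x\omega^3+v: x\in u_1^\times, v\in V\}$. Define $U'=u_1u_2u_1+u_1\omega+u_1\omega^{-1}+u_1s_2^{-1}s_1^2s_2^{-1}u_1+u_1s_2s_1^{-2}s_2u_1+u_1s_2^2s_1^2s_2^2u_1+u_1s_2^{-2}s_1^{-2}s_2^{-2}u_1+u_1s_2s_1^{-2}s_2^2u_1+u_1s_2^{-1}s_1^2s_2^{-2}u_1+u_1s_2^{-1}s_1s_2^{-1}u_1+u_1s_2s_1^{-1}s_2u_1+u_1s_2^{-2}s_1^{-2}s_2^2u_1+u_1s_2^2s_1^2s_2^{-2}u_1+u_1s_2^2s_1^{-2}s_2^2u_1+u_1s_2^{-2}s_1^2s_2^{-2}u_1+u_1s_2^{-2}s_1s_2^{-1}u_1+u_1s_2^{-1}s_1s_2^{-2}u_1$;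 $U''=U'+u_1\omega^2+u_1\omega^{-2}+u_1s_2^{-2}s_1^2s_2^{-1}s_1s_2^{-1}u_1+u_1s_2^2s_1^{-2}s_2s_1^{-1}s_2u_1+u_1s_2s_1^{-2}s_2^2s_1^{-2}s_2^2u_1+u_1s_2^{-1}s_1^2s_2^{-2}s_1^2s_2^{-2}u_1$. *)

theory Defs
  imports Main
begin

text \<open>The coefficient ring: the subring generated by a,b,c,d,e and ei = e inverse
  (image of R5 = Z[a,b,c,d,e,e^-1] in the algebra).\<close>
inductive_set scalars :: "'a::ring_1 \<Rightarrow> 'a \<Rightarrow> 'a \<Rightarrow> 'a \<Rightarrow> 'a \<Rightarrow> 'a \<Rightarrow> 'a set"
  for a b c d e ei where
  gen: "x \<in> {a, b, c, d, e, ei} \<Longrightarrow> x \<in> scalars a b c d e ei"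
| one: "1 \<in> scalars a b c d e ei"
| add: "x \<in> scalars a b c d e ei \<Longrightarrow> y \<in> scalars a b c d e ei \<Longrightarrow> x + y \<in> scalars a b c d e ei"
| neg: "x \<in> scalars a b c d e ei \<Longrightarrow> - x \<in> scalars a b c d e ei"
| mult: "x \<in> scalars a b c d e ei \<Longrightarrow> y \<in> scalars a b c d e ei \<Longrightarrow> x * y \<in> scalars a b c d e ei"

inductive_set rspan :: "'a::ring_1 set \<Rightarrow> 'a set \<Rightarrow> 'a set" for R X where
  zero: "0 \<in> rspan R X"
| step: "r \<in> R \<Longrightarrow> x \<in> X \<Longrightarrow> v \<in> rspan R X \<Longrightarrow> r * x + v \<in> rspan R X"

definition mprod :: "'a::ring_1 set \<Rightarrow> 'a set \<Rightarrow> 'a set \<Rightarrow> 'a set" where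
  "mprod R X Y = rspan R {x * y | x y. x \<in> X \<and> y \<in> Y}"

fun msums :: "'a::ring_1 set list \<Rightarrow> 'a set" where
  "msums [] = {0}"
| "msums (X # Xs) = {x + y | x y. x \<in> X \<and> y \<in> msums Xs}"

definition ualg :: "'a::ring_1 set \<Rightarrow> 'a \<Rightarrow> 'a set" where
  "ualg R s = rspan R (range (\<lambda>k::nat. s ^ k))"

definition units_in :: "'a::ring_1 set \<Rightarrow> 'a set" where
  "units_in U = {x \<in> U. \<exists>y \<in> U. x * y = 1 \<and> y * x = 1}"

definition sandw :: "'a::ring_1 set \<Rightarrow> 'a set \<Rightarrow> 'a \<Rightarrow> 'a set" where
  "sandw R U w = mprod R (mprod R U {w}) U"

text \<open>U' ; here t1, t2 denote the inverses of s1, s2.\<close>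
definition Uprime :: "'a::ring_1 set \<Rightarrow> 'a \<Rightarrow> 'a \<Rightarrow> 'a \<Rightarrow> 'a \<Rightarrow> 'a set" where
  "Uprime R s1 s2 t1 t2 =
    (let u1 = ualg R s1; u2 = ualg R s2; w = s2 * s1^2 * s2; wi = t2 * t1^2 * t2 in
     msums [mprod R (mprod R u1 u2) u1,
            mprod R u1 {w},
            mprod R u1 {wi},
            sandw R u1 (t2 * s1^2 * t2),
            sandw R u1 (s2 * t1^2 * s2),
            sandw R u1 (s2^2 * s1^2 * s2^2),
            sandw R u1 (t2^2 * t1^2 * t2^2),
            sandw R u1 (s2 * t1^2 * s2^2),
            sandw R u1 (t2 * s1^2 * t2^2),
            sandw R u1 (t2 * s1 * t2),
            sandw R u1 (s2 * t1 * s2),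
            sandw R u1 (t2^2 * t1^2 * s2^2),
            sandw R u1 (s2^2 * s1^2 * t2^2),
            sandw R u1 (s2^2 * t1^2 * s2^2),
            sandw R u1 (t2^2 * s1^2 * t2^2),
            sandw R u1 (t2^2 * s1 * t2),
            sandw R u1 (t2 * s1 * t2^2)])"

definition Udprime :: "'a::ring_1 set \<Rightarrow> 'a \<Rightarrow> 'a \<Rightarrow> 'a \<Rightarrow> 'a \<Rightarrow> 'a set" where
  "Udprime R s1 s2 t1 t2 =
    (let u1 = ualg R s1; w = s2 * s1^2 * s2; wi = t2 * t1^2 * t2 in
     msums [Uprime R s1 s2 t1 t2,
            mprod R u1 {w^2},
            mprod R u1 {wi^2},
            sandw R u1 (t2^2 * s1^2 * t2 * s1 * t2),
            sandw R u1 (s2^2 * t1^2 * s2 * t1 * s2),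
            sandw R u1 (s2 * t1^2 * s2^2 * t1^2 * s2^2),
            sandw R u1 (t2 * s1^2 * t2^2 * s1^2 * t2^2)])"

end

theory Submission
  imports Defs
begin


definition ip :: "'a::ring_1 \<Rightarrow> 'a \<Rightarrow> int \<Rightarrow> 'a" where
  "ip s t n = (if 0 \<le> n then s ^ nat n else t ^ nat (- n))"

lemma ip_succ:
  fixes s t :: "'a::ring_1"
  assumes st: "s*t=1" and ts: "t*s=1"
  shows "ip s t (n+1) = ip s t n * s"
proof (cases "0 \<le> n")
  case True
  then have "nat (n+1) = Suc (nat n)" by simp
  with True show ?thesis by (simp add: ip_def power_commutes)
next
  case False
  then have n1: "nat (-n) = Suc (nat (-(n+1)))" by simp
  have "ip s t n * s = t ^ nat (-(n+1)) * (t * s)"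
    using False by (simp add: ip_def n1 power_Suc2 mult.assoc del: power_Suc)
  also have "\<dots> = t ^ nat (-(n+1))" using ts by simp
  also have "\<dots> = ip s t (n+1)"
  proof (cases "n = -1")
    case True then show ?thesis by (simp add: ip_def)
  next
    case False2: False
    with False have "\<not> 0 \<le> n+1" by simp
    then show ?thesis by (simp add: ip_def)
  qed
  finally show ?thesis ..
qed

lemma ip_pred:
  fixes s t :: "'a::ring_1"
  assumes st: "s*t=1" and ts: "t*s=1"
  shows "ip s t (n-1) = ip s t n * t"
proof -
  have "ip s t n = ip s t (n-1) * s" using ip_succ[OF st ts, of "n-1"] by simp
  then have "ip s t n * t = ip s t (n-1) * (s * t)" by (simp add: mult.assoc)
  then show ?thesis using st by simp
qed

lemma pow_comm: fixes g s :: "'a::ring_1" assumes "g*s = s*g" shows "g * s^k = s^k * g"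
proof (induction k)
  case 0 then show ?case by simp
next
  case (Suc k)
  have "g * s ^ Suc k = (g * s^k) * s" by (simp add: power_Suc2 mult.assoc del: power_Suc)
  also have "\<dots> = s^k * (g * s)" using Suc by (simp add: mult.assoc)
  also have "\<dots> = s ^ Suc k * g" using assms by (simp add: power_Suc2 mult.assoc del: power_Suc)
  finally show ?case .
qed

lemma ip_comm:
  fixes g s t :: "'a::ring_1"
  assumes "g*s = s*g" "g*t = t*g"
  shows "g * ip s t n = ip s t n * g"
  using pow_comm[OF assms(1)] pow_comm[OF assms(2)] by (simp add: ip_def)

lemma ip_add:
  fixes s t :: "'a::ring_1"
  assumes st: "s*t=1" and ts: "t*s=1"
  shows "ip s t (m + n) = ip s t m * ip s t n"
proof (induction n rule: int_induct[where k=0])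
  case base then show ?case by (simp add: ip_def)
next
  case (step1 i)
  have "ip s t (m + (i+1)) = ip s t (m+i) * s" using ip_succ[OF st ts, of "m+i"] by (simp add: add.assoc)
  also have "\<dots> = ip s t m * (ip s t i * s)" using step1 by (simp add: mult.assoc)
  also have "\<dots> = ip s t m * ip s t (i+1)" using ip_succ[OF st ts, of i] by simp
  finally show ?case .
next
  case (step2 i)
  have "ip s t (m + (i-1)) = ip s t (m+i) * t" using ip_pred[OF st ts, of "m+i"] by (simp add: algebra_simps)
  also have "\<dots> = ip s t m * (ip s t i * t)" using step2 by (simp add: mult.assoc)
  also have "\<dots> = ip s t m * ip s t (i-1)" using ip_pred[OF st ts, of i] by simp
  finally show ?case .
qed

lemma ip_0[simp]: "ip s t 0 = 1" by (simp add: ip_def)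
lemma ip_1[simp]: "ip s t 1 = s" by (simp add: ip_def)
lemma ip_m1[simp]: "ip s t (-1) = t" by (simp add: ip_def)
lemma ip_pos: "ip s t (numeral k) = s ^ numeral k" by (simp add: ip_def)
lemma ip_neg: "ip s t (- numeral k) = t ^ numeral k" by (simp add: ip_def)




locale h5 =
  fixes a b c d e ei s1 s2 t1 t2 :: "'a::ring_1"
  assumes ca: "\<And>x. a * x = x * a" and cb: "\<And>x. b * x = x * b" and cc: "\<And>x. c * x = x * c"
      and cd: "\<And>x. d * x = x * d" and ce: "\<And>x. e * x = x * e"
    and eei: "e * ei = 1" and eie: "ei * e = 1"
    and s1t1: "s1 * t1 = 1" and t1s1: "t1 * s1 = 1"
    and s2t2: "s2 * t2 = 1" and t2s2: "t2 * s2 = 1"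
    and braid: "s1 * s2 * s1 = s2 * s1 * s2"
    and q1: "s1 ^ 5 = a * s1 ^ 4 + b * s1 ^ 3 + c * s1 ^ 2 + d * s1 + e"
    and q2: "s2 ^ 5 = a * s2 ^ 4 + b * s2 ^ 3 + c * s2 ^ 2 + d * s2 + e"
begin

abbreviation "R \<equiv> scalars a b c d e ei"

lemma cei: "ei * x = x * ei"
proof -
  have "ei * x = ei * x * (e * ei)" by (simp add: eei)
  also have "\<dots> = ei * (x * e) * ei" by (simp add: mult.assoc)
  also have "\<dots> = ei * (e * x) * ei" by (simp add: ce)
  also have "\<dots> = x * ei" by (simp add: mult.assoc[symmetric] eie)
  finally show ?thesis .
qed

lemma central: "r \<in> R \<Longrightarrow> r * x = x * r"
proof (induction arbitrary: x rule: scalars.induct)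
  case (gen y)
  then have "y = a \<or> y = b \<or> y = c \<or> y = d \<or> y = e \<or> y = ei" by simp
  then show ?case using ca[of x] cb[of x] cc[of x] cd[of x] ce[of x] cei[of x] by (elim disjE) simp_all
next
  case one then show ?case by simp
next
  case (add y z)
  have "(y + z) * x = y * x + z * x" by (simp add: distrib_right)
  also have "\<dots> = x * y + x * z" using add.IH(1)[of x] add.IH(2)[of x] by simp
  also have "\<dots> = x * (y + z)" by (simp add: distrib_left)
  finally show ?case .
next
  case (neg y)
  have "(- y) * x = - (y * x)" by simp
  also have "\<dots> = - (x * y)" using neg.IH[of x] by simp
  finally show ?case by simp
next
  case (mult y z)
  have "y * z * x = y * (z * x)" by (simp add: mult.assoc)
  also have "\<dots> = y * (x * z)" using mult.IH(2)[of x] by simp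
  also have "\<dots> = (y * x) * z" by (simp add: mult.assoc)
  also have "\<dots> = (x * y) * z" using mult.IH(1)[of x] by simp
  finally show ?case by (simp add: mult.assoc)
qed

lemma central2: "r \<in> R \<Longrightarrow> L * (r * y) = r * (L * y)"
  by (metis central mult.assoc)

lemma Ra[simp]: "a \<in> R" and Rb[simp]: "b \<in> R" and Rc[simp]: "c \<in> R" and Rd[simp]: "d \<in> R"
  and Re[simp]: "e \<in> R" and Rei[simp]: "ei \<in> R" and R1[simp]: "1 \<in> R"
  by (auto intro: scalars.gen scalars.one)

lemma Radd[simp]: "x \<in> R \<Longrightarrow> y \<in> R \<Longrightarrow> x + y \<in> R" by (rule scalars.add)
lemma Rmult[simp]: "x \<in> R \<Longrightarrow> y \<in> R \<Longrightarrow> x * y \<in> R" by (rule scalars.mult)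
lemma Rneg[simp]: "x \<in> R \<Longrightarrow> - x \<in> R" by (rule scalars.neg)
lemma Rm1[simp]: "-1 \<in> R" using Rneg[OF R1] .

definition sub :: "'a set \<Rightarrow> bool" where
  "sub M \<longleftrightarrow> 0 \<in> M \<and> (\<forall>x\<in>M. \<forall>y\<in>M. x + y \<in> M) \<and> (\<forall>r\<in>R. \<forall>x\<in>M. r * x \<in> M)"

lemma sub0: "sub M \<Longrightarrow> 0 \<in> M" by (simp add: sub_def)
lemma subadd: "sub M \<Longrightarrow> x \<in> M \<Longrightarrow> y \<in> M \<Longrightarrow> x + y \<in> M" by (simp add: sub_def)
lemma subsmul: "sub M \<Longrightarrow> r \<in> R \<Longrightarrow> x \<in> M \<Longrightarrow> r * x \<in> M" by (simp add: sub_def)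
lemma subneg: "sub M \<Longrightarrow> x \<in> M \<Longrightarrow> - x \<in> M"
  using subsmul[of M "-1" x] by simp
lemma subdiff: "sub M \<Longrightarrow> x \<in> M \<Longrightarrow> y \<in> M \<Longrightarrow> x - y \<in> M"
  using subadd[of M x "-y"] subneg[of M y] by simp

lemma rspan_sub: "sub (rspan R X)"
  unfolding sub_def
proof (intro conjI ballI)
  show "0 \<in> rspan R X" by (rule rspan.zero)
next
  fix x y assume "x \<in> rspan R X" "y \<in> rspan R X"
  then show "x + y \<in> rspan R X"
    by (induction rule: rspan.induct) (auto simp: add.assoc intro: rspan.step)
next
  fix r x assume r: "r \<in> R" and xX: "x \<in> rspan R X"
  show "r * x \<in> rspan R X" using xX
  proof (induction rule: rspan.induct)
    case zero then show ?case by (simp add: rspan.zero)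
  next
    case (step r' x' v)
    have "r * (r' * x' + v) = (r * r') * x' + r * v" by (simp add: algebra_simps)
    then show ?case using step r by (auto intro: rspan.step)
  qed
qed

lemma rspan_mem: "x \<in> X \<Longrightarrow> x \<in> rspan R X"
  using rspan.step[of 1 R x X 0] by (simp add: rspan.zero)

lemma span_map:
  assumes M: "sub M" and gen: "\<And>x. x \<in> X \<Longrightarrow> L * x * Rr \<in> M" and y: "y \<in> rspan R X"
  shows "L * y * Rr \<in> M"
  using y
proof (induction rule: rspan.induct)
  case zero then show ?case using sub0[OF M] by simp
next
  case (step r x v)
  have "L * (r * x + v) * Rr = r * (L * x * Rr) + L * v * Rr"
    using central2[OF step(1), of L x] by (simp add: algebra_simps)
  then show ?case using step gen subadd[OF M] subsmul[OF M] by simp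
qed

lemma mprod_mem: "x \<in> X \<Longrightarrow> y \<in> Y \<Longrightarrow> x * y \<in> mprod R X Y"
  unfolding mprod_def by (rule rspan_mem) blast

lemma mprod_sub: "sub (mprod R X Y)"
  unfolding mprod_def by (rule rspan_sub)

lemma mprod_map:
  assumes M: "sub M" and gen: "\<And>x y. x \<in> X \<Longrightarrow> y \<in> Y \<Longrightarrow> L * (x * y) * Rr \<in> M"
    and w: "w \<in> mprod R X Y"
  shows "L * w * Rr \<in> M"
  using span_map[OF M _ w[unfolded mprod_def]] gen by blast

lemma msums_sub: "(\<And>M. M \<in> set Ms \<Longrightarrow> sub M) \<Longrightarrow> sub (msums Ms)"
proof (induction Ms)
  case Nil then show ?case by (simp add: sub_def)
next
  case (Cons M Ms)
  have sM: "sub M" and sMs: "sub (msums Ms)" using Cons by auto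
  show ?case unfolding sub_def
  proof (intro conjI ballI)
    show "0 \<in> msums (M # Ms)" using sub0[OF sM] sub0[OF sMs] by force
  next
    fix x y assume "x \<in> msums (M # Ms)" "y \<in> msums (M # Ms)"
    then obtain x1 x2 y1 y2 where xy: "x = x1 + x2" "x1 \<in> M" "x2 \<in> msums Ms" "y = y1 + y2" "y1 \<in> M" "y2 \<in> msums Ms" by auto
    have "x + y = (x1 + y1) + (x2 + y2)" using xy by (simp add: algebra_simps)
    moreover have "x1 + y1 \<in> M" using subadd[OF sM] xy by simp
    moreover have "x2 + y2 \<in> msums Ms" using subadd[OF sMs] xy by simp
    ultimately show "x + y \<in> msums (M # Ms)" by auto
  next
    fix r x assume r: "r \<in> R" and "x \<in> msums (M # Ms)"
    then obtain x1 x2 where xy: "x = x1 + x2" "x1 \<in> M" "x2 \<in> msums Ms" by auto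
    have "r * x = r * x1 + r * x2" using xy by (simp add: algebra_simps)
    moreover have "r * x1 \<in> M" using subsmul[OF sM r] xy by simp
    moreover have "r * x2 \<in> msums Ms" using subsmul[OF sMs r] xy by simp
    ultimately show "r * x \<in> msums (M # Ms)" by auto
  qed
qed

lemma msums_mem: "(\<And>M. M \<in> set Ms \<Longrightarrow> sub M) \<Longrightarrow> M \<in> set Ms \<Longrightarrow> x \<in> M \<Longrightarrow> x \<in> msums Ms"
proof (induction Ms)
  case Nil then show ?case by simp
next
  case (Cons N Ms)
  show ?case
  proof (cases "M = N")
    case True
    have "0 \<in> msums Ms" using sub0 msums_sub Cons by simp
    then show ?thesis using Cons True by force
  next
    case False
    then have "x \<in> msums Ms" using Cons by simp
    moreover have "0 \<in> N" using Cons sub0 by simp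
    ultimately show ?thesis by force
  qed
qed

lemma msums_map:
  assumes "\<And>N. N \<in> set Ms \<Longrightarrow> sub N" and "\<And>N x. N \<in> set Ms \<Longrightarrow> x \<in> N \<Longrightarrow> L * x * Rr \<in> N"
    and "x \<in> msums Ms"
  shows "L * x * Rr \<in> msums Ms"
  using assms
proof (induction Ms arbitrary: x)
  case Nil then show ?case by simp
next
  case (Cons N Ms)
  from Cons.prems(3) obtain x1 x2 where x: "x = x1 + x2" "x1 \<in> N" "x2 \<in> msums Ms" by auto
  have "L * x2 * Rr \<in> msums Ms" using Cons.IH[of x2] Cons.prems x by simp
  moreover have "L * x1 * Rr \<in> N" using Cons.prems x by simp
  moreover have "L * x * Rr = L * x1 * Rr + L * x2 * Rr" using x by (simp add: algebra_simps)
  ultimately show ?case by auto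
qed

definition bimodg :: "'a \<Rightarrow> 'a \<Rightarrow> 'a set \<Rightarrow> bool" where
  "bimodg s t M \<longleftrightarrow> sub M \<and> (\<forall>x\<in>M. s*x \<in> M \<and> x*s \<in> M \<and> t*x \<in> M \<and> x*t \<in> M)"

lemma bimodg_pow:
  assumes "bimodg s t M" "x \<in> M"
  shows "s^k * x \<in> M" "x * s^k \<in> M" "t^k * x \<in> M" "x * t^k \<in> M"
proof -
  have *: "\<forall>x\<in>M. s*x \<in> M \<and> x*s \<in> M \<and> t*x \<in> M \<and> x*t \<in> M" using assms(1) by (simp add: bimodg_def)
  have "s^k * x \<in> M \<and> x * s^k \<in> M \<and> t^k * x \<in> M \<and> x * t^k \<in> M" using assms(2)
  proof (induction k arbitrary: x)
    case 0 then show ?case by simp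
  next
    case (Suc k)
    have "s * x \<in> M" "x * s \<in> M" "t * x \<in> M" "x * t \<in> M" using * Suc.prems by auto
    then have "s^k * (s * x) \<in> M" "(x * s) * s^k \<in> M" "t^k * (t * x) \<in> M" "(x*t) * t^k \<in> M"
      using Suc.IH by blast+
    moreover have "s^Suc k * x = s^k * (s * x)" "t^Suc k * x = t^k * (t * x)"
      by (simp_all add: mult.assoc power_Suc2 del: power_Suc)
    moreover have "x * s^Suc k = (x * s) * s^k" "x * t^Suc k = (x * t) * t^k"
      by (simp_all add: mult.assoc)
    ultimately show ?case by simp
  qed
  then show "s^k * x \<in> M" "x * s^k \<in> M" "t^k * x \<in> M" "x * t^k \<in> M" by auto
qed

lemma bimodg_ip:
  assumes "bimodg s t M" "x \<in> M"
  shows "ip s t n * x \<in> M" "x * ip s t n \<in> M"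
  using bimodg_pow[OF assms] by (auto simp: ip_def)

lemma bimodg_alg:
  assumes B: "bimodg s t M" and x: "x \<in> M" and p: "p \<in> ualg R s"
  shows "p * x \<in> M" "x * p \<in> M"
proof -
  have sM: "sub M" using B by (simp add: bimodg_def)
  show "p * x \<in> M"
    using span_map[OF sM _ p[unfolded ualg_def], of 1 x] bimodg_pow[OF B x] by auto
  show "x * p \<in> M"
    using span_map[OF sM _ p[unfolded ualg_def], of x 1] bimodg_pow[OF B x] by auto
qed

lemma ualg_sub: "sub (ualg R s)" unfolding ualg_def by (rule rspan_sub)
lemma ualg_pow: "s ^ k \<in> ualg R s" unfolding ualg_def by (rule rspan_mem) auto

lemma ualg_t:
  assumes st: "s*t=1" and ts: "t*s=1"
    and q: "s ^ 5 = a * s ^ 4 + b * s ^ 3 + c * s ^ 2 + d * s + e"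
  shows "t \<in> ualg R s"
proof -
  define X where "X = ei * s^4 - (ei*a) * s^3 - (ei*b) * s^2 - (ei*c) * s^1 - (ei*d) * s^0"
  have p: "s * s^3 = s^4" "s * s^2 = s^3" "s * s^4 = s^5" "s * s^1 = s^2" "s * s^0 = s^1"
    by (simp_all add: numeral_eq_Suc)
  have "s * X = ei * s^5 - (ei*a) * s^4 - (ei*b) * s^3 - (ei*c) * s^2 - (ei*d) * s^1"
    unfolding X_def by (simp only: right_diff_distrib central2[OF Rei] central2[OF Rmult[OF Rei Ra]]
      central2[OF Rmult[OF Rei Rb]] central2[OF Rmult[OF Rei Rc]] central2[OF Rmult[OF Rei Rd]] p)
  also have "\<dots> = ei * (s^5 - a * s^4 - b * s^3 - c * s^2 - d * s)"
    by (simp add: algebra_simps)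
  also have "\<dots> = ei * e" using q by (simp add: algebra_simps)
  finally have sX: "s * X = 1" using eie by simp
  have "t = t * (s * X)" using sX by simp
  also have "\<dots> = X" using ts by (simp add: mult.assoc[symmetric])
  finally have tX: "t = X" .
  have S: "sub (ualg R s)" by (rule ualg_sub)
  have "X \<in> ualg R s" unfolding X_def
    by (intro subdiff[OF S] subsmul[OF S] ualg_pow) auto
  then show ?thesis using tX by simp
qed

lemma ualg_bimod:
  assumes st: "s*t=1" and ts: "t*s=1"
    and q: "s ^ 5 = a * s ^ 4 + b * s ^ 3 + c * s ^ 2 + d * s + e"
  shows "bimodg s t (ualg R s)"
proof -
  have S: "sub (ualg R s)" by (rule ualg_sub)
  have tin: "t \<in> ualg R s" by (rule ualg_t[OF st ts q])
  have g1: "s * s^k \<in> ualg R s" "s^k * s \<in> ualg R s" for k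
    using ualg_pow[of s "Suc k"] by (auto simp: power_commutes)
  have g2: "t * s^k \<in> ualg R s" "s^k * t \<in> ualg R s" for k
  proof -
    show "t * s^k \<in> ualg R s"
    proof (cases k)
      case 0 then show ?thesis using tin by simp
    next
      case (Suc j) then show ?thesis using ts ualg_pow[of s j] by (simp add: mult.assoc[symmetric])
    qed
    show "s^k * t \<in> ualg R s"
    proof (cases k)
      case 0 then show ?thesis using tin by simp
    next
      case (Suc j) then show ?thesis using st ualg_pow[of s j]
        by (simp add: mult.assoc power_Suc2 del: power_Suc)
    qed
  qed
  show ?thesis unfolding bimodg_def
  proof (intro conjI ballI S)
    fix x assume x: "x \<in> ualg R s"
    show "s * x \<in> ualg R s" using span_map[OF S _ x[unfolded ualg_def], of s 1] g1 by auto
    show "x * s \<in> ualg R s" using span_map[OF S _ x[unfolded ualg_def], of 1 s] g1 by auto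
    show "t * x \<in> ualg R s" using span_map[OF S _ x[unfolded ualg_def], of t 1] g2 by auto
    show "x * t \<in> ualg R s" using span_map[OF S _ x[unfolded ualg_def], of 1 t] g2 by auto
  qed
qed

end



context h5 begin

lemma c11: "s1 * (t1 * x) = x" by (simp add: mult.assoc[symmetric] s1t1)
lemma c12: "t1 * (s1 * x) = x" by (simp add: mult.assoc[symmetric] t1s1)
lemma c21: "s2 * (t2 * x) = x" by (simp add: mult.assoc[symmetric] s2t2)
lemma c22: "t2 * (s2 * x) = x" by (simp add: mult.assoc[symmetric] t2s2)
lemmas cancel = c11 c12 c21 c22 s1t1 t1s1 s2t2 t2s2

lemma br: "s1 * (s2 * (s1 * x)) = s2 * (s1 * (s2 * x))"
  using arg_cong[OF braid, of "\<lambda>y. y * x"] by (simp add: mult.assoc)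

lemma br0: "s1 * (s2 * s1) = s2 * (s1 * s2)"
  using braid by (simp add: mult.assoc)

abbreviation "P1 \<equiv> ip s1 t1"
abbreviation "P2 \<equiv> ip s2 t2"
abbreviation "u1 \<equiv> ualg R s1"
abbreviation "u2 \<equiv> ualg R s2"

lemma P1_add: "P1 (m + n) = P1 m * P1 n" by (rule ip_add[OF s1t1 t1s1])
lemma P2_add: "P2 (m + n) = P2 m * P2 n" by (rule ip_add[OF s2t2 t2s2])

lemma P1_s: "P1 n = P1 (n-1) * s1" "P1 n = s1 * P1 (n-1)" "P1 n = P1 (n+1) * t1" "P1 n = t1 * P1 (n+1)"
  using P1_add[of "n-1" 1] P1_add[of 1 "n-1"] P1_add[of "n+1" "-1"] P1_add[of "-1" "n+1"] by simp_all
lemma P2_s: "P2 n = P2 (n-1) * s2" "P2 n = s2 * P2 (n-1)" "P2 n = P2 (n+1) * t2" "P2 n = t2 * P2 (n+1)"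
  using P2_add[of "n-1" 1] P2_add[of 1 "n-1"] P2_add[of "n+1" "-1"] P2_add[of "-1" "n+1"] by simp_all

lemma K1: "t2 * (s1 * s2) = s1 * (s2 * t1)"
proof -
  have "t2 * (s1 * s2) = t2 * (s1 * (s2 * (s1 * t1)))" by (simp add: cancel)
  also have "\<dots> = t2 * (s2 * (s1 * (s2 * t1)))" by (simp add: br)
  also have "\<dots> = s1 * (s2 * t1)" by (simp add: cancel)
  finally show ?thesis .
qed

lemma K2: "s2 * (s1 * t2) = t1 * (s2 * s1)"
proof -
  have "t1 * (s2 * s1) = t1 * (s2 * (s1 * (s2 * t2)))" by (simp add: cancel)
  also have "\<dots> = t1 * (s1 * (s2 * (s1 * t2)))" by (simp add: br)
  also have "\<dots> = s2 * (s1 * t2)" by (simp add: cancel mult.assoc)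
  finally show ?thesis ..
qed

lemma C1: "P2 n * (s1 * s2) = (s1 * s2) * P1 n"
proof (induction n rule: int_induct[where k=0])
  case base then show ?case by simp
next
  case (step1 i)
  have "P2 (i+1) * (s1 * s2) = P2 i * (s2 * (s1 * s2))" using P2_s(1)[of "i+1"] by (simp add: mult.assoc)
  also have "\<dots> = (P2 i * (s1 * s2)) * s1" by (simp add: mult.assoc br br0)
  also have "\<dots> = (s1 * s2) * (P1 i * s1)" using step1 by (simp add: mult.assoc)
  also have "\<dots> = (s1 * s2) * P1 (i+1)" using P1_s(1)[of "i+1"] by simp
  finally show ?case .
next
  case (step2 i)
  have "P2 (i-1) * (s1 * s2) = P2 i * (t2 * (s1 * s2))" using P2_s(3)[of "i-1"] by (simp add: mult.assoc)
  also have "\<dots> = (P2 i * (s1 * s2)) * t1" by (simp add: mult.assoc K1)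
  also have "\<dots> = (s1 * s2) * (P1 i * t1)" using step2 by (simp add: mult.assoc)
  also have "\<dots> = (s1 * s2) * P1 (i-1)" using P1_s(3)[of "i-1"] by simp
  finally show ?case .
qed

lemma C2: "(s2 * s1) * P2 n = P1 n * (s2 * s1)"
proof (induction n rule: int_induct[where k=0])
  case base then show ?case by simp
next
  case (step1 i)
  have "(s2 * s1) * P2 (i+1) = ((s2 * s1) * P2 i) * s2" using P2_s(1)[of "i+1"] by (simp add: mult.assoc)
  also have "\<dots> = P1 i * (s2 * (s1 * s2))" using step1 by (simp add: mult.assoc)
  also have "\<dots> = (P1 i * s1) * (s2 * s1)" by (simp add: mult.assoc br br0)
  also have "\<dots> = P1 (i+1) * (s2 * s1)" using P1_s(1)[of "i+1"] by simp
  finally show ?case .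
next
  case (step2 i)
  have "(s2 * s1) * P2 (i-1) = ((s2 * s1) * P2 i) * t2" using P2_s(3)[of "i-1"] by (simp add: mult.assoc)
  also have "\<dots> = P1 i * ((s2 * s1) * t2)" using step2 by (simp add: mult.assoc)
  also have "\<dots> = (P1 i * t1) * (s2 * s1)" by (simp add: K2 mult.assoc)
  also have "\<dots> = P1 (i-1) * (s2 * s1)" using P1_s(3)[of "i-1"] by simp
  finally show ?case .
qed

lemma C3: "P2 n * (t1 * t2) = (t1 * t2) * P1 n"
proof -
  have "P2 n * (t1 * t2) = (t1 * t2) * ((s2 * s1) * P2 n) * (t1 * t2)"
    by (simp add: mult.assoc cancel)
  also have "\<dots> = (t1 * t2) * P1 n" using C2[of n] by (simp add: mult.assoc cancel)
  finally show ?thesis .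
qed

lemma C4: "(t2 * t1) * P2 n = P1 n * (t2 * t1)"
proof -
  have "(t2 * t1) * P2 n = (t2 * t1) * (P2 n * (s1 * s2)) * (t2 * t1)"
    by (simp add: mult.assoc cancel)
  also have "\<dots> = P1 n * (t2 * t1)" using C1[of n] by (simp add: mult.assoc cancel)
  finally show ?thesis .
qed

definition "z = s1 * s2 * s1 * s1 * s2 * s1"
definition "zi = t1 * t2 * t1 * t1 * t2 * t1"

definition "D = s1 * s2 * s1"
lemma D_s1: "D * s1 = s2 * D" unfolding D_def by (simp add: mult.assoc br br0)
lemma D_s2: "D * s2 = s1 * D" unfolding D_def by (simp add: mult.assoc br br0)
lemma zD: "z = D * D" unfolding z_def D_def by (simp add: mult.assoc)
lemma z_s1: "z * s1 = s1 * z"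
  unfolding zD by (simp add: mult.assoc D_s1 D_s2) (simp add: mult.assoc[symmetric] D_s1 D_s2)
lemma z_s2: "z * s2 = s2 * z"
  unfolding zD by (simp add: mult.assoc D_s1 D_s2) (simp add: mult.assoc[symmetric] D_s1 D_s2)
end



context h5 begin

lemma comm_inv:
  fixes g s t :: 'a
  assumes "g * s = s * g" "s * t = 1" "t * s = 1"
  shows "g * t = t * g"
proof -
  have "t * g = t * g * (s * t)" using assms(2) by simp
  also have "\<dots> = t * (g * s) * t" by (simp add: mult.assoc)
  also have "\<dots> = (t * s) * g * t" using assms(1) by (simp add: mult.assoc)
  also have "\<dots> = g * t" using assms by simp
  finally show ?thesis ..
qed

lemma z_t1: "z * t1 = t1 * z" using comm_inv[OF z_s1 s1t1 t1s1] .
lemma z_t2: "z * t2 = t2 * z" using comm_inv[OF z_s2 s2t2 t2s2] .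

lemma z_zi: "z * zi = 1" unfolding z_def zi_def by (simp add: mult.assoc cancel)
lemma zi_z: "zi * z = 1" unfolding z_def zi_def by (simp add: mult.assoc cancel)

lemma zi_comm: fixes g :: 'a assumes "z * g = g * z" shows "zi * g = g * zi"
  using comm_inv[of g z zi] assms z_zi zi_z by simp

lemma zi_s1: "zi * s1 = s1 * zi" using zi_comm z_s1 by simp
lemma zi_s2: "zi * s2 = s2 * zi" using zi_comm z_s2 by simp
lemma zi_t1: "zi * t1 = t1 * zi" using zi_comm z_t1 by simp
lemma zi_t2: "zi * t2 = t2 * zi" using zi_comm z_t2 by simp

abbreviation "Z \<equiv> ip z zi"
lemma Z_add: "Z (m + n) = Z m * Z n" by (rule ip_add[OF z_zi zi_z])
lemma Z_succ: "Z (k + 1) = Z k * z" using Z_add[of k 1] by simp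
lemma Z_pred: "Z (k - 1) = Z k * zi" using Z_add[of k "-1"] by simp

lemma Z_comm: fixes g :: 'a assumes "g * z = z * g" "g * zi = zi * g" shows "g * Z k = Z k * g"
  using ip_comm[OF assms] .

lemma Z_s1: "s1 * Z k = Z k * s1" by (rule Z_comm) (simp_all add: z_s1 zi_s1)
lemma Z_s2: "s2 * Z k = Z k * s2" by (rule Z_comm) (simp_all add: z_s2 zi_s2)
lemma Z_t1: "t1 * Z k = Z k * t1" by (rule Z_comm) (simp_all add: z_t1 zi_t1)
lemma Z_t2: "t2 * Z k = Z k * t2" by (rule Z_comm) (simp_all add: z_t2 zi_t2)
lemma Z_P1: "P1 n * Z k = Z k * P1 n"
  using ip_comm[of "Z k" s1 t1 n] Z_s1 Z_t1 by simp
lemma Z_P2: "P2 n * Z k = Z k * P2 n"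
  using ip_comm[of "Z k" s2 t2 n] Z_s2 Z_t2 by simp
lemma z_P1: "P1 n * z = z * P1 n"
  using ip_comm[of z s1 t1 n] z_s1 z_t1 by simp
lemma z_P2: "P2 n * z = z * P2 n"
  using ip_comm[of z s2 t2 n] z_s2 z_t2 by simp

lemma om: "s2 * (s1 * (s1 * s2)) = t1 * (t1 * z)"
proof -
  have w: "s2 * (s1 * (s1 * (s2 * s1))) = s1 * (s2 * (s1 * (s1 * s2)))"
    by (simp add: br br0)
  have "z = s1 * (s2 * (s1 * (s1 * (s2 * s1))))" unfolding z_def by (simp add: mult.assoc)
  also have "\<dots> = s1 * (s1 * (s2 * (s1 * (s1 * s2))))" using w by simp
  finally have "t1 * (t1 * z) = s2 * (s1 * (s1 * s2))" by (simp add: cancel)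
  then show ?thesis ..
qed

lemma D_alt: "D = s2 * s1 * s2" unfolding D_def using braid .

lemma om2: "s1 * (s2 * (s2 * s1)) = t2 * (t2 * z)"
proof -
  have "s2 * (s2 * (s1 * (s2 * (s2 * s1)))) = s2 * (D * s2 * s1)" unfolding D_alt by (simp add: mult.assoc)
  also have "\<dots> = s2 * s1 * (D * s1)" using D_s2 by (simp add: mult.assoc)
  also have "\<dots> = s2 * s1 * s2 * D" using D_s1 by (simp add: mult.assoc)
  also have "\<dots> = z" unfolding zD using D_alt by simp
  finally have F: "s2 * (s2 * (s1 * (s2 * (s2 * s1)))) = z" .
  have "t2 * (t2 * z) = t2 * (t2 * (s2 * (s2 * (s1 * (s2 * (s2 * s1))))))" using F by simp
  also have "\<dots> = s1 * (s2 * (s2 * s1))" by (simp add: cancel)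
  finally show ?thesis ..
qed

lemma s2sq: "s2 * s2 = t1 * (t2 * (t2 * (t1 * z)))"
proof -
  have "s2 * s2 = t1 * (s1 * (s2 * (s2 * s1))) * t1" by (simp add: mult.assoc cancel)
  also have "\<dots> = t1 * (t2 * (t2 * z)) * t1" by (simp add: om2)
  also have "\<dots> = t1 * (t2 * (t2 * (t1 * z)))" by (simp add: mult.assoc z_t1)
  finally show ?thesis .
qed

lemma P1_2: "P1 2 = s1 * s1" by (simp add: ip_def power2_eq_square)
lemma P1_m2: "P1 (-2) = t1 * t1" by (simp add: ip_def power2_eq_square)
lemma P2_2: "P2 2 = s2 * s2" by (simp add: ip_def power2_eq_square)
lemma P2_m2: "P2 (-2) = t2 * t2" by (simp add: ip_def power2_eq_square)

lemma EQa: "P2 x * s1 * P2 y = P2 (x-1) * P1 y * (s2 * s1)"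
proof -
  have "P2 x * s1 * P2 y = P2 (x-1) * ((s2 * s1) * P2 y)" using P2_s(1)[of x] by (simp add: mult.assoc)
  also have "\<dots> = P2 (x-1) * P1 y * (s2 * s1)" using C2[of y] by (simp add: mult.assoc)
  finally show ?thesis .
qed

lemma EQb: "P2 x * s1 * P2 y = (s1 * s2) * P1 x * P2 (y-1)"
proof -
  have "P2 x * s1 * P2 y = (P2 x * (s1 * s2)) * P2 (y-1)" using P2_s(2)[of y] by (simp add: mult.assoc)
  also have "\<dots> = (s1 * s2) * P1 x * P2 (y-1)" using C1[of x] by (simp add: mult.assoc)
  finally show ?thesis .
qed

lemma EQc: "P2 x * t1 * P2 y = P2 (x+1) * P1 y * (t2 * t1)"
proof -
  have "P2 x * t1 * P2 y = P2 (x+1) * ((t2 * t1) * P2 y)" using P2_s(3)[of x] by (simp add: mult.assoc)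
  also have "\<dots> = P2 (x+1) * P1 y * (t2 * t1)" using C4[of y] by (simp add: mult.assoc)
  finally show ?thesis .
qed

lemma EQd: "P2 x * t1 * P2 y = (t1 * t2) * P1 x * P2 (y+1)"
proof -
  have "P2 x * t1 * P2 y = (P2 x * (t1 * t2)) * P2 (y+1)" using P2_s(4)[of y] by (simp add: mult.assoc)
  also have "\<dots> = (t1 * t2) * P1 x * P2 (y+1)" using C3[of x] by (simp add: mult.assoc)
  finally show ?thesis .
qed

lemma EQ2: "P2 x * (s1 * s1) * P2 y = P2 (x-1) * (t1 * t1) * P2 (y-1) * z"
proof -
  have "P2 x * (s1 * s1) * P2 y = P2 (x-1) * (s2 * (s1 * (s1 * s2))) * P2 (y-1)"
    using P2_s(1)[of x] P2_s(2)[of y] by (simp add: mult.assoc)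
  also have "\<dots> = P2 (x-1) * (t1 * t1) * (z * P2 (y-1))" by (simp add: om mult.assoc)
  also have "\<dots> = P2 (x-1) * (t1 * t1) * P2 (y-1) * z" by (simp add: z_P2 mult.assoc)
  finally show ?thesis .
qed

lemma EQ3a: "P1 y * (s2 * s2) = P1 (y-1) * (t2 * t2) * t1 * z"
proof -
  have "P1 y * (s2 * s2) = (P1 y * t1) * (t2 * (t2 * (t1 * z)))" by (simp add: s2sq mult.assoc)
  then show ?thesis using P1_s(3)[of "y-1"] by (simp add: mult.assoc)
qed

lemma EQ3b: "(s2 * s2) * P1 y = t1 * (t2 * t2) * P1 (y-1) * z"
proof -
  have "(s2 * s2) * P1 y = t1 * (t2 * (t2 * ((t1 * P1 y) * z)))" by (simp add: s2sq mult.assoc z_P1)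
  then show ?thesis using P1_s(4)[of "y-1"] by (simp add: mult.assoc)
qed

end



context h5 begin

fun wdg :: "bool \<Rightarrow> int list \<Rightarrow> 'a" where
  "wdg g [] = 1"
| "wdg g (x # xs) = (if g then P2 x else P1 x) * wdg (\<not> g) xs"

definition IN :: "'a set \<Rightarrow> int list \<Rightarrow> int \<Rightarrow> bool" where
  "IN M xs k \<longleftrightarrow> wdg True xs * Z k \<in> M"

abbreviation "bimod \<equiv> bimodg s1 t1"

lemma sca: "L * (a * y) = a * (L * y)" by (rule central2) simp
lemma scb: "L * (b * y) = b * (L * y)" by (rule central2) simp
lemma scc: "L * (c * y) = c * (L * y)" by (rule central2) simp
lemma scd: "L * (d * y) = d * (L * y)" by (rule central2) simp
lemma sce: "L * (e * y) = e * (L * y)" by (rule central2) simp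
lemmas sc = sca scb scc scd sce

lemma z_Z: "z * Z k = Z k * z"
  by (rule ip_comm) (simp_all add: z_zi zi_z)

lemma zZ1: "z * Z k = Z (k+1)" "z * (Z k * X) = Z (k+1) * X"
  by (simp_all add: z_Z Z_succ mult.assoc[symmetric])
lemma zP2': "z * P2 n = P2 n * z" "z * (P2 n * X) = P2 n * (z * X)"
  by (simp_all add: z_P2 mult.assoc[symmetric])

lemma rec2: "P2 (t+5) = a * P2 (t+4) + b * P2 (t+3) + c * P2 (t+2) + d * P2 (t+1) + e * P2 t"
proof -
  have "P2 (t+5) = P2 t * s2^5" using P2_add[of t 5] by (simp add: ip_pos)
  also have "\<dots> = a * (P2 t * s2^4) + b * (P2 t * s2^3) + c * (P2 t * s2^2) + d * (P2 t * s2) + e * P2 t"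
    by (simp add: q2 distrib_left sc ce[of "P2 t"])
  also have "\<dots> = a * P2 (t+4) + b * P2 (t+3) + c * P2 (t+2) + d * P2 (t+1) + e * P2 t"
    using P2_add[of t 4] P2_add[of t 3] P2_add[of t 2] P2_add[of t 1] by (simp add: ip_pos)
  finally show ?thesis .
qed

lemma rec1: "P1 (t+5) = a * P1 (t+4) + b * P1 (t+3) + c * P1 (t+2) + d * P1 (t+1) + e * P1 t"
proof -
  have "P1 (t+5) = P1 t * s1^5" using P1_add[of t 5] by (simp add: ip_pos)
  also have "\<dots> = a * (P1 t * s1^4) + b * (P1 t * s1^3) + c * (P1 t * s1^2) + d * (P1 t * s1) + e * P1 t"
    by (simp add: q1 distrib_left sc ce[of "P1 t"])
  also have "\<dots> = a * P1 (t+4) + b * P1 (t+3) + c * P1 (t+2) + d * P1 (t+1) + e * P1 t"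
    using P1_add[of t 4] P1_add[of t 3] P1_add[of t 2] P1_add[of t 1] by (simp add: ip_pos)
  finally show ?thesis .
qed

lemma rec_ctx:
  fixes g :: "int \<Rightarrow> 'a" and t :: int
  assumes "\<And>t. g (t+5) = a * g (t+4) + b * g (t+3) + c * g (t+2) + d * g (t+1) + e * g t"
  shows "L * g (t+5) * Rr = a * (L * g (t+4) * Rr) + b * (L * g (t+3) * Rr) + c * (L * g (t+2) * Rr)
           + d * (L * g (t+1) * Rr) + e * (L * g t * Rr)"
  by (simp add: assms distrib_left distrib_right sc mult.assoc)

lemma line:
  fixes f :: "int \<Rightarrow> 'a" and n m :: int
  assumes M: "sub M"
    and r: "\<And>t. f (t+5) = a * f (t+4) + b * f (t+3) + c * f (t+2) + d * f (t+1) + e * f t"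
    and h: "f n \<in> M" "f (n+1) \<in> M" "f (n+2) \<in> M" "f (n+3) \<in> M" "f (n+4) \<in> M"
  shows "f m \<in> M"
proof -
  let ?Q = "\<lambda>t. f t \<in> M \<and> f (t+1) \<in> M \<and> f (t+2) \<in> M \<and> f (t+3) \<in> M \<and> f (t+4) \<in> M"
  have "?Q m"
  proof (induction m rule: int_induct[where k=n])
    case base then show ?case using h by simp
  next
    case (step1 i)
    have "f (i+5) \<in> M" unfolding r
      using step1 by (intro subadd[OF M] subsmul[OF M]) auto
    then show ?case using step1 by (simp add: add.assoc)
  next
    case (step2 i)
    have rr: "f (i+4) = a * f (i+3) + b * f (i+2) + c * f (i+1) + d * f i + e * f (i-1)"
      using r[of "i-1"] by (simp add: algebra_simps)
    have "f (i-1) = ei * (e * f (i-1))" by (simp add: mult.assoc[symmetric] eie)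
    also have "\<dots> = ei * (f (i+4) - a * f (i+3) - b * f (i+2) - c * f (i+1) - d * f i)"
      using rr by (simp add: algebra_simps)
    finally have eq: "f (i-1) = ei * (f (i+4) - a * f (i+3) - b * f (i+2) - c * f (i+1) - d * f i)" .
    have "f (i-1) \<in> M" unfolding eq
      using step2 by (intro subsmul[OF M] subdiff[OF M]) auto
    then show ?case using step2 by (simp add: algebra_simps)
  qed
  then show ?thesis by simp
qed

end

locale h5m = h5 + fixes M assumes bm: "bimod M"
begin

lemma sM: "sub M" using bm by (simp add: bimodg_def)

lemma lu: "P1 n * X \<in> M \<longleftrightarrow> X \<in> M"
proof
  assume "P1 n * X \<in> M"
  then have "P1 (-n) * (P1 n * X) \<in> M" by (rule bimodg_ip[OF bm])
  moreover have "P1 (-n) * (P1 n * X) = X" using P1_add[of "-n" n] by (simp add: mult.assoc[symmetric])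
  ultimately show "X \<in> M" by simp
qed (rule bimodg_ip[OF bm])

lemma ru: "X * P1 n \<in> M \<longleftrightarrow> X \<in> M"
proof
  assume "X * P1 n \<in> M"
  then have "(X * P1 n) * P1 (-n) \<in> M" by (rule bimodg_ip[OF bm])
  moreover have "(X * P1 n) * P1 (-n) = X" using P1_add[of n "-n"] by (simp add: mult.assoc)
  ultimately show "X \<in> M" by simp
qed (rule bimodg_ip[OF bm])

lemma IN_eq:
  assumes "wdg True xs * Z k = P1 m * (wdg True ys * Z k') * P1 n"
  shows "IN M xs k = IN M ys k'"
  unfolding IN_def assms using lu ru by simp

lemma M1a: "IN M [x,1,y] k = IN M [x-1,y,1] k"
proof (rule IN_eq[where m=0 and n=1])
  have "wdg True [x,1,y] * Z k = (P2 x * s1 * P2 y) * Z k" by (simp add: mult.assoc)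
  also have "\<dots> = (P2 (x-1) * P1 y * (s2 * s1)) * Z k" by (simp only: EQa)
  also have "\<dots> = P1 0 * (wdg True [x-1,y,1] * Z k) * P1 1" by (simp add: mult.assoc Z_s1)
  finally show "wdg True [x,1,y] * Z k = P1 0 * (wdg True [x-1,y,1] * Z k) * P1 1" .
qed

lemma M1b: "IN M [x,1,y] k = IN M [1,x,y-1] k"
proof (rule IN_eq[where m=1 and n=0])
  have "wdg True [x,1,y] * Z k = (P2 x * s1 * P2 y) * Z k" by (simp add: mult.assoc)
  also have "\<dots> = ((s1 * s2) * P1 x * P2 (y-1)) * Z k" by (simp only: EQb)
  also have "\<dots> = P1 1 * (wdg True [1,x,y-1] * Z k) * P1 0" by (simp add: mult.assoc)
  finally show "wdg True [x,1,y] * Z k = P1 1 * (wdg True [1,x,y-1] * Z k) * P1 0" .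
qed

lemma M1c: "IN M [x,-1,y] k = IN M [x+1,y,-1] k"
proof (rule IN_eq[where m=0 and n="-1"])
  have "wdg True [x,-1,y] * Z k = (P2 x * t1 * P2 y) * Z k" by (simp add: mult.assoc)
  also have "\<dots> = (P2 (x+1) * P1 y * (t2 * t1)) * Z k" by (simp only: EQc)
  also have "\<dots> = P1 0 * (wdg True [x+1,y,-1] * Z k) * P1 (-1)" by (simp add: mult.assoc Z_t1)
  finally show "wdg True [x,-1,y] * Z k = P1 0 * (wdg True [x+1,y,-1] * Z k) * P1 (-1)" .
qed

lemma M1d: "IN M [x,-1,y] k = IN M [-1,x,y+1] k"
proof (rule IN_eq[where m="-1" and n=0])
  have "wdg True [x,-1,y] * Z k = (P2 x * t1 * P2 y) * Z k" by (simp add: mult.assoc)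
  also have "\<dots> = ((t1 * t2) * P1 x * P2 (y+1)) * Z k" by (simp only: EQd)
  also have "\<dots> = P1 (-1) * (wdg True [-1,x,y+1] * Z k) * P1 0" by (simp add: mult.assoc)
  finally show "wdg True [x,-1,y] * Z k = P1 (-1) * (wdg True [-1,x,y+1] * Z k) * P1 0" .
qed

lemma M2: "IN M [x,2,y] k = IN M [x-1,-2,y-1] (k+1)"
proof (rule IN_eq[where m=0 and n=0])
  have "wdg True [x,2,y] * Z k = (P2 x * (s1 * s1) * P2 y) * Z k" by (simp add: mult.assoc P1_2)
  also have "\<dots> = (P2 (x-1) * (t1 * t1) * P2 (y-1) * z) * Z k" by (simp only: EQ2)
  also have "\<dots> = P1 0 * (wdg True [x-1,-2,y-1] * Z (k+1)) * P1 0"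
    by (simp add: mult.assoc Z_succ P1_m2 z_Z)
  finally show "wdg True [x,2,y] * Z k = P1 0 * (wdg True [x-1,-2,y-1] * Z (k+1)) * P1 0" .
qed

lemma M3a: "IN M [x,y,2] k = IN M [x,y-1,-2] (k+1)"
proof (rule IN_eq[where m=0 and n="-1"])
  have "wdg True [x,y,2] * Z k = P2 x * (P1 y * (s2 * s2)) * Z k" by (simp add: mult.assoc P2_2)
  also have "\<dots> = P2 x * (P1 (y-1) * (t2 * t2) * t1 * z) * Z k" by (simp only: EQ3a)
  also have "\<dots> = P1 0 * (wdg True [x,y-1,-2] * Z (k+1)) * P1 (-1)"
    by (simp add: mult.assoc P2_m2 zZ1 Z_t1)
  finally show "wdg True [x,y,2] * Z k = P1 0 * (wdg True [x,y-1,-2] * Z (k+1)) * P1 (-1)" .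
qed

lemma M3b: "IN M [2,y,w] k = IN M [-2,y-1,w] (k+1)"
proof (rule IN_eq[where m="-1" and n=0])
  have "wdg True [2,y,w] * Z k = ((s2 * s2) * P1 y) * (P2 w * Z k)" by (simp add: mult.assoc P2_2)
  also have "\<dots> = (t1 * (t2 * t2) * P1 (y-1) * z) * (P2 w * Z k)" by (simp only: EQ3b)
  also have "\<dots> = P1 (-1) * (wdg True [-2,y-1,w] * Z (k+1)) * P1 0"
    by (simp add: mult.assoc P2_m2 zP2' zZ1)
  finally show "wdg True [2,y,w] * Z k = P1 (-1) * (wdg True [-2,y-1,w] * Z (k+1)) * P1 0" .
qed

lemma N1[simp]: "IN M [x,0,y] k = IN M [x+y] k"
  unfolding IN_def by (simp add: P2_add)
lemma N2[simp]: "IN M [0,y,w] k = IN M [w] k"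
  by (rule IN_eq[where m=y and n=0]) (simp add: mult.assoc)
lemma N3[simp]: "IN M [x,y,0] k = IN M [x] k"
  by (rule IN_eq[where m=0 and n=y]) (simp add: mult.assoc Z_P1)
lemma N4[simp]: "IN M [0] k = IN M [] k"
  unfolding IN_def by simp

lemma L0:
  assumes "IN M [n,y,w] k" "IN M [n+1,y,w] k" "IN M [n+2,y,w] k" "IN M [n+3,y,w] k" "IN M [n+4,y,w] k"
  shows "IN M [m,y,w] k"
proof -
  let ?f = "\<lambda>t. 1 * P2 t * (P1 y * P2 w * Z k)"
  have e: "IN M [t,y,w] k \<longleftrightarrow> ?f t \<in> M" for t unfolding IN_def by (simp add: mult.assoc)
  have "?f m \<in> M" by (rule line[OF sM rec_ctx[OF rec2]]) (use assms e in auto)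
  then show ?thesis using e by simp
qed

lemma L1:
  assumes "IN M [x,n,w] k" "IN M [x,n+1,w] k" "IN M [x,n+2,w] k" "IN M [x,n+3,w] k" "IN M [x,n+4,w] k"
  shows "IN M [x,m,w] k"
proof -
  let ?f = "\<lambda>t. P2 x * P1 t * (P2 w * Z k)"
  have e: "IN M [x,t,w] k \<longleftrightarrow> ?f t \<in> M" for t unfolding IN_def by (simp add: mult.assoc)
  have "?f m \<in> M" by (rule line[OF sM rec_ctx[OF rec1]]) (use assms e in auto)
  then show ?thesis using e by simp
qed

lemma L2:
  assumes "IN M [x,y,n] k" "IN M [x,y,n+1] k" "IN M [x,y,n+2] k" "IN M [x,y,n+3] k" "IN M [x,y,n+4] k"
  shows "IN M [x,y,m] k"
proof -
  let ?f = "\<lambda>t. (P2 x * P1 y) * P2 t * Z k"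
  have e: "IN M [x,y,t] k \<longleftrightarrow> ?f t \<in> M" for t unfolding IN_def by (simp add: mult.assoc)
  have "?f m \<in> M" by (rule line[OF sM rec_ctx[OF rec2]]) (use assms e in auto)
  then show ?thesis using e by simp
qed

lemma LB:
  assumes "IN M [n] k" "IN M [n+1] k" "IN M [n+2] k" "IN M [n+3] k" "IN M [n+4] k"
  shows "IN M [m] k"
proof -
  let ?f = "\<lambda>t. 1 * P2 t * Z k"
  have e: "IN M [t] k \<longleftrightarrow> ?f t \<in> M" for t unfolding IN_def by (simp add: mult.assoc)
  have "?f m \<in> M" by (rule line[OF sM rec_ctx[OF rec2]]) (use assms e in auto)
  then show ?thesis using e by simp
qed

end



lemma int5: "(x::int) \<in> {-2..2} \<Longrightarrow> x = -2 \<or> x = -1 \<or> x = 0 \<or> x = 1 \<or> x = 2" by auto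

context h5m begin

lemma box_all:
  assumes B: "\<And>x y w. x \<in> {-2..2} \<Longrightarrow> y \<in> {-2..2} \<Longrightarrow> w \<in> {-2..2} \<Longrightarrow> IN M [x,y,w] k"
  shows "IN M [x,y,w] k"
proof -
  have s1: "IN M [x',y',w'] k" if "y' \<in> {-2..2}" "w' \<in> {-2..2}" for x' y' w'
    by (rule L0[of "-2"]) (use B[of "-2" y' w'] B[of "-1" y' w'] B[of 0 y' w'] B[of 1 y' w'] B[of 2 y' w'] that in simp_all)
  have s2: "IN M [x',y',w'] k" if "w' \<in> {-2..2}" for x' y' w'
    by (rule L1[of _ "-2"]) (use s1[of "-2" w' x'] s1[of "-1" w' x'] s1[of 0 w' x'] s1[of 1 w' x'] s1[of 2 w' x'] that in simp_all)
  show ?thesis by (rule L2[of _ _ "-2"]) (use s2[of "-2" x y] s2[of "-1" x y] s2[of 0 x y] s2[of 1 x y] s2[of 2 x y] in simp_all)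
qed

lemma derivU:
  assumes l2: "\<And>x. IN M [x] 0" and l0: "IN M [] 0" "IN M [] 1" "IN M [] (-1)" "IN M [] 2" "IN M [] (-2)"
    and g0: "IN M [-1, 2, -1] 0"
    and g1: "IN M [1, -2, 1] 0"
    and g2: "IN M [2, 2, 2] 0"
    and g3: "IN M [-2, -2, -2] 0"
    and g4: "IN M [1, -2, 2] 0"
    and g5: "IN M [-1, 2, -2] 0"
    and g6: "IN M [-1, 1, -1] 0"
    and g7: "IN M [1, -1, 1] 0"
    and g8: "IN M [-2, -2, 2] 0"
    and g9: "IN M [2, 2, -2] 0"
    and g10: "IN M [2, -2, 2] 0"
    and g11: "IN M [-2, 2, -2] 0"
    and g12: "IN M [-2, 1, -1] 0"
    and g13: "IN M [-1, 1, -2] 0"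
    and gA: "IN M [-2, 3, 3] (-1)" and gB: "IN M [2, -3, -3] 1"
  shows "IN M [x,y,w] 0" "IN M [m] 2" "IN M [2, -3, -3] 1" "IN M [2, 2, -3] 1"
proof -
  have f0: "IN M [-2, -2, -2] 0" using g3 by simp
  have f1: "IN M [] (-1)" using l0 by simp
  have f2: "IN M [-1, -2, -1] 0" using M2[of 0 0 "-1"] f1 by simp
  have f3: "IN M [-1] 0" using l2[of "-1"] by simp
  have f4: "IN M [-2] 0" using l2[of "-2"] by simp
  have f5: "IN M [1, -2, -1] 0" using M1b[of "-2" 0 0] f4 by simp
  have f6: "IN M [-1, 1, -1] 0" using g6 by simp
  have f7: "IN M [1, -1, -2] 0" using M1b[of "-1" "-1" 0] f6 by simp
  have f8: "IN M [2, -2, -1] 0" using M1c[of 1 "-2" 0] f7 by simp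
  have f9: "IN M [-1, 2, -1] 0" using g0 by simp
  have f10: "IN M [2, -1, -2] 0" using M1d[of 2 "-2" 0] f9 by simp
  have f11: "IN M [3, -2, -1] 0" using M1c[of 2 "-2" 0] f10 by simp
  have f12: "IN M [-2, -2, -1] 0" using L0[of "-1" "-2" "-1" 0 "-2"] f2 f3 f5 f8 f11 by simp
  have f13: "IN M [-1, 1, -2] 0" using g13 by simp
  have f14: "IN M [-2, -2, 1] 0" using M1a[of "-1" "-2" 0] f13 by simp
  have f15: "IN M [-2, -2, 2] 0" using g8 by simp
  have f16: "IN M [-2, -1, -2] 0" using M3a[of "-2" 0 "-1"] f1 by simp
  have f17: "IN M [-2, -1, -1] 0" using M1d[of "-2" "-1" 0] f3 by simp
  have f18: "IN M [-2, -1, 1] 0" using M1c[of "-2" 1 0] f6 by simp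
  have f19: "IN M [-2, -1, 2] 0" using M1c[of "-2" 2 0] f9 by simp
  have f20: "IN M [-4] 0" using l2[of "-4"] by simp
  have f21: "IN M [-3] 0" using l2[of "-3"] by simp
  have f22: "IN M [] 0" using l0 by simp
  have f23: "IN M [-2, 1, -1] 0" using g12 by simp
  have f24: "IN M [1] 0" using l2[of 1] by simp
  have f25: "IN M [-2, 1, 1] 0" using M1b[of "-2" 1 0] f24 by simp
  have f26: "IN M [1, -2, 1] 0" using g1 by simp
  have f27: "IN M [-2, 1, 2] 0" using M1b[of "-2" 2 0] f26 by simp
  have f28: "IN M [1, -2, 2] 0" using g4 by simp
  have f29: "IN M [-2, 1, 3] 0" using M1b[of "-2" 3 0] f28 by simp
  have f30: "IN M [-2, 1, -2] 0" using L2[of "-2" 1 "-1" 0 "-2"] f23 f4 f25 f27 f29 by simp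
  have f31: "IN M [-2, 2, -2] 0" using g11 by simp
  have f32: "IN M [1] (-1)" using M2[of 0 1 "-1"] f3 by simp
  have f33: "IN M [2] (-1)" using M3b[of "-7" 0 "-1"] f4 by simp
  have f34: "IN M [3] (-1)" using M3b[of 0 1 "-1"] f18 by simp
  have f35: "IN M [4] (-1)" using M3b[of 0 2 "-1"] f19 by simp
  have f36: "IN M [-1] (-1)" using L0[of 0 "-7" 0 "-1" "-1"] f1 f32 f33 f34 f35 by simp
  have f37: "IN M [1, 1, -2] (-1)" using M1a[of 1 "-2" "-1"] f32 by simp
  have f38: "IN M [1, 2, -2] (-1)" using M2[of 1 "-2" "-1"] f21 by simp
  have f39: "IN M [-1, 2, 2] (-1)" using M3a[of "-1" 2 "-1"] f13 by simp
  have f40: "IN M [2, -1, 1] (-1)" using M1d[of 2 1 "-1"] f39 by simp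
  have f41: "IN M [3, 1, -1] (-1)" using M1c[of 2 1 "-1"] f40 by simp
  have f42: "IN M [1, 3, -2] (-1)" using M1b[of 3 "-1" "-1"] f41 by simp
  have f43: "IN M [-1, 2, -2] 0" using g5 by simp
  have f44: "IN M [-1, 3, 2] (-1)" using M3a[of "-1" 3 "-1"] f43 by simp
  have f45: "IN M [3, -1, 1] (-1)" using M1d[of 3 1 "-1"] f44 by simp
  have f46: "IN M [4, 1, -1] (-1)" using M1c[of 3 1 "-1"] f45 by simp
  have f47: "IN M [1, 4, -2] (-1)" using M1b[of 4 "-1" "-1"] f46 by simp
  have f48: "IN M [1, -1, -2] (-1)" using L1[of 1 0 "-2" "-1" "-1"] f36 f37 f38 f42 f47 by simp
  have f49: "IN M [1, 1, -1] (-1)" using M1c[of 0 1 "-1"] f32 by simp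
  have f50: "IN M [1, 2, -1] (-1)" using M2[of 1 "-1" "-1"] f4 by simp
  have f51: "IN M [1, 3, -1] (-1)" using M1c[of 0 3 "-1"] f34 by simp
  have f52: "IN M [1, 4, -1] (-1)" using M1c[of 0 4 "-1"] f35 by simp
  have f53: "IN M [1, -1, -1] (-1)" using L1[of 1 0 "-1" "-1" "-1"] f1 f49 f50 f51 f52 by simp
  have f54: "IN M [-1, 1, 2] (-1)" using M3a[of "-1" 1 "-1"] f21 by simp
  have f55: "IN M [1, -1, 1] (-1)" using M1b[of "-1" 2 "-1"] f54 by simp
  have f56: "IN M [2, 2, -1] (-1)" using M3b[of 2 "-1" "-1"] f23 by simp
  have f57: "IN M [1, -1, 2] (-1)" using M1c[of 1 2 "-1"] f56 by simp
  have f58: "IN M [1, -1, 3] (-1)" using L2[of 1 "-1" "-2" "-1" 3] f48 f53 f32 f55 f57 by simp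
  have f59: "IN M [2, 3, -1] (-1)" using M1c[of 1 3 "-1"] f58 by simp
  have f60: "IN M [-2, 2, -1] 0" using M3b[of 3 "-1" "-1"] f59 by simp
  have f61: "IN M [1, -1, 1] 0" using g7 by simp
  have f62: "IN M [-1, 1, 2] 0" using M1b[of "-1" 2 0] f61 by simp
  have f63: "IN M [-2, 2, 1] 0" using M1a[of "-1" 2 0] f62 by simp
  have f64: "IN M [2, 2, -2] 0" using g9 by simp
  have f65: "IN M [2, 3, 2] (-1)" using M3a[of 2 3 "-1"] f64 by simp
  have f66: "IN M [-2, 2, 2] 0" using M3b[of 3 2 "-1"] f65 by simp
  have f67: "IN M [-1, -2, 1] 0" using M1d[of "-2" 0 0] f4 by simp
  have f68: "IN M [-1, -2, 2] 0" using M1d[of "-2" 1 0] f18 by simp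
  have f69: "IN M [-1, -2, 3] 0" using M1d[of "-2" 2 0] f19 by simp
  have f70: "IN M [-1, -2, -2] 0" using L2[of "-1" "-2" "-1" 0 "-2"] f2 f3 f67 f68 f69 by simp
  have f71: "IN M [-1, -1, -2] 0" using M1c[of "-1" "-2" 0] f3 by simp
  have f72: "IN M [-1, -1, -1] 0" using M1c[of "-1" "-1" 0] f3 by simp
  have f73: "IN M [-1, -1, 1] 0" using M1d[of "-1" 0 0] f3 by simp
  have f74: "IN M [-1, -1, 2] 0" using M1c[of "-1" 2 0] f3 by simp
  have f75: "IN M [-1, 1, 1] 0" using M1b[of "-1" 1 0] f24 by simp
  have f76: "IN M [2] 0" using l2[of 2] by simp
  have f77: "IN M [-1, 2, 1] 0" using M1a[of 0 2 0] f76 by simp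
  have f78: "IN M [-3, -1, 1] 0" using M1c[of "-3" 1 0] f23 by simp
  have f79: "IN M [-1, -3, 2] 0" using M1d[of "-3" 1 0] f78 by simp
  have f80: "IN M [-1, 2, 2] 0" using L1[of "-1" "-3" 2 0 2] f79 f68 f74 f24 f62 by simp
  have f81: "IN M [1, -2, -2] 0" using M1b[of "-2" "-1" 0] f23 by simp
  have f82: "IN M [1, -1, -1] 0" using M1b[of "-1" 0 0] f3 by simp
  have f83: "IN M [1, -1, -3] 0" using M1b[of "-1" "-2" 0] f13 by simp
  have f84: "IN M [1, -1, 2] 0" using L2[of 1 "-1" "-3" 0 2] f83 f7 f82 f24 f61 by simp
  have f85: "IN M [3] 0" using l2[of 3] by simp
  have f86: "IN M [1, 1, -2] 0" using M1a[of 1 "-2" 0] f24 by simp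
  have f87: "IN M [1, 1, -1] 0" using M1c[of 0 1 0] f24 by simp
  have f88: "IN M [1, 1, 1] 0" using M1a[of 1 1 0] f24 by simp
  have f89: "IN M [1, 1, 2] 0" using M1a[of 1 2 0] f24 by simp
  have f90: "IN M [2, 1, -1] 0" using M1c[of 1 1 0] f61 by simp
  have f91: "IN M [1, 2, -2] 0" using M1b[of 2 "-1" 0] f90 by simp
  have f92: "IN M [1, 2, -1] 0" using M1c[of 0 2 0] f76 by simp
  have f93: "IN M [] 1" using l0 by simp
  have f94: "IN M [1, 2, 1] 0" using M2[of 1 1 0] f93 by simp
  have f95: "IN M [2, 1, -2] 0" using M1a[of 2 "-2" 0] f26 by simp
  have f96: "IN M [1, 2, -3] 0" using M1b[of 2 "-2" 0] f95 by simp
  have f97: "IN M [1, 2, 2] 0" using L2[of 1 2 "-3" 0 2] f96 f91 f92 f24 f94 by simp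
  have f98: "IN M [2, -1, 2] (-1)" using M3b[of "-1" 2 "-1"] f15 by simp
  have f99: "IN M [2, -2, -2] 0" using M3a[of 2 "-1" "-1"] f98 by simp
  have f100: "IN M [-3, 1, 1] 0" using M1b[of "-3" 1 0] f24 by simp
  have f101: "IN M [-3, 2, 1] 0" using M1a[of "-2" 2 0] f27 by simp
  have f102: "IN M [-3, 3, 1] 0" using M1a[of "-2" 3 0] f29 by simp
  have f103: "IN M [-3, -2, 1] 0" using L1[of "-3" "-1" 1 0 "-2"] f78 f4 f100 f101 f102 by simp
  have f104: "IN M [2, -2, 1] 0" using L0[of "-3" "-2" 1 0 2] f103 f14 f67 f24 f26 by simp
  have f105: "IN M [2, -2, 2] 0" using g10 by simp
  have f106: "IN M [2, -1, -1] 0" using M1d[of 2 "-1" 0] f3 by simp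
  have f107: "IN M [2, -1, 1] 0" using L0[of "-3" "-1" 1 0 2] f78 f18 f73 f24 f61 by simp
  have f108: "IN M [2, -1, -3] 0" using M1d[of 2 "-3" 0] f43 by simp
  have f109: "IN M [2, -1, 2] 0" using L2[of 2 "-1" "-3" 0 2] f108 f10 f106 f76 f107 by simp
  have f110: "IN M [4] 0" using l2[of 4] by simp
  have f111: "IN M [2, 1, 1] 0" using M1b[of 2 1 0] f24 by simp
  have f112: "IN M [2, 1, 2] 0" using M3b[of 1 2 0] f93 by simp
  have f113: "IN M [2, -3, -1] 0" using M1c[of 1 "-3" 0] f83 by simp
  have f114: "IN M [2, 2, -1] 0" using L1[of 2 "-3" "-1" 0 2] f113 f8 f106 f24 f90 by simp
  have f115: "IN M [2, 2, 1] 0" using L0[of "-3" 2 1 0 2] f101 f63 f77 f24 f94 by simp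
  have f116: "IN M [2, 2, 2] 0" using g2 by simp
  have f117: "IN M [-4] 1" using M3a[of "-2" 1 0] f27 by simp
  have f118: "IN M [-2, -1, -6] 2" using M3b[of 0 "-6" 1] f117 by simp
  have f119: "IN M [-3] 1" using M3a[of "-1" 1 0] f62 by simp
  have f120: "IN M [-2, -1, -5] 2" using M3b[of 0 "-5" 1] f119 by simp
  have f121: "IN M [-2] 1" using M3b[of "-7" 0 0] f76 by simp
  have f122: "IN M [-2, -1, -4] 2" using M3b[of 0 "-4" 1] f121 by simp
  have f123: "IN M [-1] 1" using M2[of 0 1 0] f24 by simp
  have f124: "IN M [-2, -1, -3] 2" using M3b[of 0 "-3" 1] f123 by simp
  have f125: "IN M [-2, -1, -2] 2" using M3a[of "-2" 0 1] f93 by simp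
  have f126: "IN M [-2] 2" using L2[of "-2" "-1" "-6" 2 0] f118 f120 f122 f124 f125 by simp
  have f127: "IN M [-5, -2, -1] 2" using M2[of "-4" 0 1] f117 by simp
  have f128: "IN M [-4, -2, -1] 2" using M2[of "-3" 0 1] f119 by simp
  have f129: "IN M [-3, -2, -1] 2" using M2[of "-2" 0 1] f121 by simp
  have f130: "IN M [-2, -2, -1] 2" using M2[of "-1" 0 1] f123 by simp
  have f131: "IN M [-1, -2, -1] 2" using M2[of 0 0 1] f93 by simp
  have f132: "IN M [-1] 2" using L0[of "-5" "-2" "-1" 2 0] f127 f128 f129 f130 f131 by simp
  have f133: "IN M [] 2" using l0 by simp
  have f134: "IN M [2, 1, -2] 1" using M3a[of 2 2 0] f116 by simp
  have f135: "IN M [-4] 2" using M3b[of 1 "-2" 1] f134 by simp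
  have f136: "IN M [-1, -4, -2] 1" using M3a[of "-1" "-3" 0] f79 by simp
  have f137: "IN M [-4, -1, -2] 1" using M3a[of "-4" 0 0] f4 by simp
  have f138: "IN M [-1, -4, -1] 1" using M1d[of "-4" "-2" 1] f137 by simp
  have f139: "IN M [-1, -4, 1] 1" using M1d[of "-4" 0 1] f117 by simp
  have f140: "IN M [1, -3, -2] 1" using M3a[of 1 "-2" 0] f28 by simp
  have f141: "IN M [-3, 1, -1] 1" using M1b[of "-3" "-1" 1] f140 by simp
  have f142: "IN M [-4, -1, 1] 1" using M1c[of "-4" 1 1] f141 by simp
  have f143: "IN M [-1, -4, 2] 1" using M1d[of "-4" 1 1] f142 by simp
  have f144: "IN M [-1, -4, -3] 1" using L2[of "-1" "-4" "-2" 1 "-3"] f136 f138 f123 f139 f143 by simp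
  have f145: "IN M [-2, -4, -1] 1" using M3b[of "-3" "-1" 0] f113 by simp
  have f146: "IN M [-3, -1, -4] 1" using M1c[of "-3" "-4" 1] f145 by simp
  have f147: "IN M [-1, -3, -3] 1" using M1d[of "-3" "-4" 1] f146 by simp
  have f148: "IN M [-1, -2, -3] 1" using M2[of 0 "-2" 0] f4 by simp
  have f149: "IN M [-1, -1, -2] 1" using M3a[of "-1" 0 0] f24 by simp
  have f150: "IN M [-1, -1, -3] 1" using M1d[of "-1" "-3" 1] f149 by simp
  have f151: "IN M [-1, 1, -3] 1" using L1[of "-1" "-4" "-3" 1 1] f144 f147 f148 f150 f117 by simp
  have f152: "IN M [-1, -3, -2] 1" using M3a[of "-1" "-2" 0] f68 by simp
  have f153: "IN M [-1, -2, -2] 1" using M2[of 0 "-1" 0] f3 by simp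
  have f154: "IN M [-1, 1, -2] 1" using L1[of "-1" "-4" "-2" 1 1] f136 f152 f153 f149 f119 by simp
  have f155: "IN M [-2, -1, 1] 1" using M3b[of 0 1 0] f85 by simp
  have f156: "IN M [-1, 1, -1] 1" using M1c[of "-2" 1 1] f155 by simp
  have f157: "IN M [-1, -3, 1] 1" using M1d[of "-3" 0 1] f119 by simp
  have f158: "IN M [-1, -2, 1] 1" using M2[of 0 2 0] f76 by simp
  have f159: "IN M [-1, -1, 1] 1" using M1d[of "-1" 0 1] f123 by simp
  have f160: "IN M [-1, 1, 1] 1" using L1[of "-1" "-4" 1 1 1] f139 f157 f158 f159 f93 by simp
  have f161: "IN M [-1, 1, 2] 1" using L2[of "-1" 1 "-3" 1 2] f151 f154 f156 f123 f160 by simp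
  have f162: "IN M [-3] 2" using M3a[of "-1" 1 1] f161 by simp
  have f163: "IN M [1] 2" using L0[of "-4" "-7" 0 2 1] f135 f162 f126 f132 f133 by simp
  have f164: "IN M [2] 2" using L0[of "-4" "-7" 0 2 2] f135 f162 f126 f132 f133 by simp
  have f165: "IN M [2, -3, -3] 1" using gB by simp
  have f166: "IN M [-2, -4, -3] 2" using M3b[of "-3" "-3" 1] f165 by simp
  have f167: "IN M [-3, -2, -3] 1" using M2[of "-2" "-2" 0] f31 by simp
  have f168: "IN M [-2, -2, -3] 1" using M2[of "-1" "-2" 0] f43 by simp
  have f169: "IN M [1, -2, -3] 1" using M2[of 2 "-2" 0] f64 by simp
  have f170: "IN M [2, -2, -3] 1" using L0[of "-3" "-2" "-3" 1 2] f167 f168 f148 f119 f169 by simp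
  have f171: "IN M [-2, -3, -3] 2" using M3b[of "-2" "-3" 1] f170 by simp
  have f172: "IN M [-4, -1, -3] 1" using M1d[of "-4" "-3" 1] f136 by simp
  have f173: "IN M [-3, -1, -3] 1" using M1d[of "-3" "-3" 1] f152 by simp
  have f174: "IN M [-2, -1, -3] 1" using M3b[of 0 "-3" 0] f3 by simp
  have f175: "IN M [2, -1, -3] 1" using L0[of "-4" "-1" "-3" 1 2] f172 f173 f174 f150 f119 by simp
  have f176: "IN M [-2, -2, -3] 2" using M3b[of "-1" "-3" 1] f175 by simp
  have f177: "IN M [-5] 2" using L0[of "-4" "-7" 0 2 "-5"] f135 f162 f126 f132 f133 by simp
  have f178: "IN M [-2, 1, -3] 2" using L1[of "-2" "-4" "-3" 2 1] f166 f171 f176 f124 f177 by simp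
  have f179: "IN M [2, 2, -3] 1" using M3b[of 2 "-3" 1] f178 by simp
  have box: "IN M [x,y,w] 0" if "x \<in> {-2..2}" "y \<in> {-2..2}" "w \<in> {-2..2}" for x y w
    using int5[OF that(1)] int5[OF that(2)] int5[OF that(3)]
    by (elim disjE) (simp_all add: f0 f1 f2 f3 f4 f5 f6 f7 f8 f9 f10 f11 f12 f13 f14 f15 f16 f17 f18 f19 f20 f21 f22 f23 f24 f25 f26 f27 f28 f29 f30 f31 f32 f33 f34 f35 f36 f37 f38 f39 f40 f41 f42 f43 f44 f45 f46 f47 f48 f49 f50 f51 f52 f53 f54 f55 f56 f57 f58 f59 f60 f61 f62 f63 f64 f65 f66 f67 f68 f69 f70 f71 f72 f73 f74 f75 f76 f77 f78 f79 f80 f81 f82 f83 f84 f85 f86 f87 f88 f89 f90 f91 f92 f93 f94 f95 f96 f97 f98 f99 f100 f101 f102 f103 f104 f105 f106 f107 f108 f109 f110 f111 f112 f113 f114 f115 f116 f117 f118 f119 f120 f121 f122 f123 f124 f125 f126 f127 f128 f129 f130 f131 f132 f133 f134 f135 f136 f137 f138 f139 f140 f141 f142 f143 f144 f145 f146 f147 f148 f149 f150 f151 f152 f153 f154 f155 f156 f157 f158 f159 f160 f161 f162 f163 f164 f165 f166 f167 f168 f169 f170 f171 f172 f173 f174 f175 f176 f177 f178 f179)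
  show "IN M [x,y,w] 0" by (rule box_all[OF box])
  show "IN M [m] 2" by (rule LB[of "-2" 2 m]) (simp_all add: f126 f132 f133 f163 f164)
  show "IN M [2, -3, -3] 1" by (rule gB)
  show "IN M [2, 2, -3] 1" by (rule f179)
qed

lemma derivY:
  assumes y3: "\<And>x y w. IN M [x,y,w] 0" and y2: "\<And>x. IN M [x] 0" and y0: "IN M [] 0"
    and y22: "\<And>x. IN M [x] 2" and yG: "IN M [2, 2, -3] 1"
  shows "IN M [1, 1, 1] 2" "IN M [2] 2" "IN M [1, -1, 1] 2" "IN M [1, -2, 1] 2"
proof -
  have f0: "IN M [1] 2" using y22[of 1] by simp
  have f1: "IN M [1, 1, 1] 2" using M1a[of 1 1 2] f0 by simp
  have f2: "IN M [2] 2" using y22[of 2] by simp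
  have f3: "IN M [2, 2, 3] 0" using y3[of 2 2 3] by simp
  have f4: "IN M [1, -2, 2] 1" using M2[of 2 3 0] f3 by simp
  have f5: "IN M [1, -3, -2] 2" using M3a[of 1 "-2" 1] f4 by simp
  have f6: "IN M [-3, 1, -1] 2" using M1b[of "-3" "-1" 2] f5 by simp
  have f7: "IN M [-4, -1, 1] 2" using M1c[of "-4" 1 2] f6 by simp
  have f8: "IN M [2, 4, 1] 0" using y3[of 2 4 1] by simp
  have f9: "IN M [-2, 3, 1] 1" using M3b[of 4 1 0] f8 by simp
  have f10: "IN M [-1, 1, 3] 1" using M1a[of "-1" 3 1] f9 by simp
  have f11: "IN M [1, -1, 2] 1" using M1b[of "-1" 3 1] f10 by simp
  have f12: "IN M [1, -2, -2] 2" using M3a[of 1 "-1" 1] f11 by simp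
  have f13: "IN M [-2, 1, -1] 2" using M1b[of "-2" "-1" 2] f12 by simp
  have f14: "IN M [-3, -1, 1] 2" using M1c[of "-3" 1 2] f13 by simp
  have f15: "IN M [1, 2, 4] 0" using y3[of 1 2 4] by simp
  have f16: "IN M [3] 1" using M2[of 1 4 0] f15 by simp
  have f17: "IN M [-2, -1, 1] 2" using M3b[of 0 1 1] f16 by simp
  have f18: "IN M [-1] 2" using y22[of "-1"] by simp
  have f19: "IN M [-1, -1, 1] 2" using M1d[of "-1" 0 2] f18 by simp
  have f20: "IN M [1, -1, 1] 2" using L0[of "-4" "-1" 1 2 1] f7 f14 f17 f19 f0 by simp
  have f21: "IN M [2, 2, -3] 1" using yG by simp
  have f22: "IN M [1, -2, -4] 2" using M2[of 2 "-3" 1] f21 by simp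
  have f23: "IN M [2, 3, 2] 0" using y3[of 2 3 2] by simp
  have f24: "IN M [2, 2, -2] 1" using M3a[of 2 3 0] f23 by simp
  have f25: "IN M [1, -2, -3] 2" using M2[of 2 "-2" 1] f24 by simp
  have f26: "IN M [-2] 2" using y22[of "-2"] by simp
  have f27: "IN M [1, -2, -1] 2" using M1b[of "-2" 0 2] f26 by simp
  have f28: "IN M [1, -2, 1] 2" using L2[of 1 "-2" "-4" 2 1] f22 f25 f12 f27 f0 by simp
  show "IN M [1, 1, 1] 2" "IN M [2] 2" "IN M [1, -1, 1] 2" "IN M [1, -2, 1] 2" using f1 f2 f20 f28 by simp_all
qed

end



context h5 begin

lemma RC2r: "P1 n * (s2 * (s1 * X)) = s2 * (s1 * (P2 n * X))"
  using arg_cong[OF C2[of n], of "\<lambda>y. y * X"] by (simp add: mult.assoc)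
lemma RC1: "P2 n * (s1 * (s2 * X)) = s1 * (s2 * (P1 n * X))"
  using arg_cong[OF C1[of n], of "\<lambda>y. y * X"] by (simp add: mult.assoc)
lemma Rom: "s2 * (s1 * (s1 * (s2 * X))) = t1 * (t1 * (z * X))"
  using arg_cong[OF om, of "\<lambda>y. y * X"] by (simp add: mult.assoc)
lemma Rom2: "s1 * (s2 * (s2 * (s1 * X))) = t2 * (t2 * (z * X))"
  using arg_cong[OF om2, of "\<lambda>y. y * X"] by (simp add: mult.assoc)
lemma zpush: "z * (s1 * X) = s1 * (z * X)" "z * (s2 * X) = s2 * (z * X)"
  "z * (t1 * X) = t1 * (z * X)" "z * (t2 * X) = t2 * (z * X)"
  "z * (P1 n * X) = P1 n * (z * X)" "z * (P2 n * X) = P2 n * (z * X)"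
  "z * s1 = s1 * z" "z * s2 = s2 * z" "z * t1 = t1 * z" "z * t2 = t2 * z"
  "z * P1 n = P1 n * z" "z * P2 n = P2 n * z"
  by (simp_all add: mult.assoc[symmetric] z_s1 z_s2 z_t1 z_t2 z_P1 z_P2)

lemma P2_s': "P2 n * X = s2 * (P2 (n-1) * X)" "P2 n * X = P2 (n-1) * (s2 * X)"
proof -
  show "P2 n * X = s2 * (P2 (n-1) * X)" using P2_s(2)[of n] by (metis mult.assoc)
  show "P2 n * X = P2 (n-1) * (s2 * X)" using P2_s(1)[of n] by (metis mult.assoc)
qed

lemma Fid: "s2 * (P1 j * (s2 * (s1 * (s1 * (s1 * s2))))) = t1 * (P2 (j-3) * (t1 * (t1 * (z * z))))"
proof -
  have "s2 * (P1 j * (s2 * (s1 * (s1 * (s1 * s2))))) = s2 * (s2 * (s1 * (P2 j * (s1 * (s1 * s2)))))"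
    by (simp only: RC2r)
  also have "\<dots> = s2 * (s2 * (s1 * (s2 * (P2 (j-1) * (s1 * (s1 * s2))))))"
    using P2_s'(1)[of j] by simp
  also have "\<dots> = P2 2 * (s1 * (s2 * (P2 (j-1) * (s1 * (s1 * s2)))))"
    by (simp add: P2_2 mult.assoc)
  also have "\<dots> = s1 * (s2 * (s1 * (s1 * (P2 (j-1) * (s1 * (s1 * s2))))))"
    by (simp add: RC1 P1_2 mult.assoc)
  also have "\<dots> = s1 * (s2 * (s1 * (s1 * (s2 * (P2 (j-2) * (s1 * (s1 * s2)))))))"
    using P2_s'(1)[of "j-1"] by simp
  also have "\<dots> = t1 * (z * (P2 (j-2) * (s1 * (s1 * s2))))"
    by (simp add: Rom cancel)
  also have "\<dots> = t1 * (z * (P2 (j-3) * (s2 * (s1 * (s1 * s2)))))"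
    using P2_s'(2)[of "j-2"] by simp
  also have "\<dots> = t1 * (z * (P2 (j-3) * (t1 * (t1 * z))))"
    by (simp add: om)
  also have "\<dots> = t1 * (P2 (j-3) * (t1 * (t1 * (z * z))))"
    by (simp add: zpush)
  finally show ?thesis .
qed

lemma s1cube: "s1 ^ 3 = s1 * (s1 * s1)" by (simp add: power3_eq_cube mult.assoc)

lemma Gid: "s2 * s2 * (s1 * (s1 * s1)) * s2 * t1 * s2 = P2 2 * (P1 2 * (P2 (-3) * (t1 * z)))"
proof -
  have "s2 * s2 * (s1 * (s1 * s1)) * s2 * t1 * s2 = s2 * s2 * (s1 * (s1 * s1)) * (P2 1 * t1 * P2 1)"
    by (simp add: mult.assoc)
  also have "\<dots> = s2 * s2 * (s1 * (s1 * s1)) * (P2 2 * P1 1 * (t2 * t1))" by (simp only: EQc) simp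
  also have "\<dots> = s2 * (s2 * (s1 * (s1 * (s1 * (s2 * (s2 * (s1 * (t2 * t1))))))))"
    by (simp add: P2_2 mult.assoc)
  also have "\<dots> = s2 * (s2 * (s1 * (s1 * (t2 * (t2 * (z * (t2 * t1)))))))"
    by (simp add: Rom2)
  also have "\<dots> = P2 2 * (P1 2 * (P2 (-3) * (t1 * z)))"
    by (simp add: zpush P2_2 P1_2 mult.assoc ip_neg power3_eq_cube)
  finally show ?thesis .
qed


lemma om2i: "t1 * (t2 * (t2 * (t1 * X))) = s2 * (s2 * (zi * X))"
proof -
  have "s2 * (s2 * (zi * X)) = (s2 * s2) * (zi * X)" by (simp add: mult.assoc)
  also have "\<dots> = t1 * (t2 * (t2 * (t1 * ((z * zi) * X))))" by (simp add: s2sq mult.assoc)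
  also have "\<dots> = t1 * (t2 * (t2 * (t1 * X)))" by (simp add: z_zi)
  finally show ?thesis ..
qed

lemma zipush: "zi * s1 = s1 * zi" "zi * (s1 * X) = s1 * (zi * X)" "zi * (s2 * X) = s2 * (zi * X)"
  by (simp_all add: zi_s1 zi_s2 mult.assoc[symmetric])

lemma Aid: "t2^2 * s1^2 * t2 * s1 * t2 = P2 (-2) * (P1 3 * (P2 3 * (s1 * zi)))"
proof -
  have "t2^2 * s1^2 * t2 * s1 * t2 = t2^2 * s1^2 * (P2 (-1) * s1 * P2 (-1))"
    by (simp add: mult.assoc)
  also have "\<dots> = t2^2 * s1^2 * (P2 (-2) * P1 (-1) * (s2 * s1))" by (simp only: EQa) simp
  also have "\<dots> = t2 * (t2 * (s1 * (s1 * (s1 * (t1 * (t2 * (t2 * (t1 * (s2 * s1)))))))))"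
    by (simp add: P2_m2 power2_eq_square mult.assoc cancel)
  also have "\<dots> = t2 * (t2 * (s1 * (s1 * (s1 * (s2 * (s2 * (zi * (s2 * s1))))))))"
    by (simp only: om2i)
  also have "\<dots> = P2 (-2) * (P1 3 * (P2 3 * (s1 * zi)))"
    by (simp add: P2_m2 ip_pos power3_eq_cube mult.assoc zipush)
  finally show ?thesis .
qed

lemma Bid: "s2^2 * t1^2 * s2 * t1 * s2 = P2 2 * (P1 (-3) * (P2 (-3) * (t1 * z)))"
proof -
  have "s2^2 * t1^2 * s2 * t1 * s2 = s2^2 * t1^2 * (P2 1 * t1 * P2 1)"
    by (simp add: mult.assoc)
  also have "\<dots> = s2^2 * t1^2 * (P2 2 * P1 1 * (t2 * t1))" by (simp only: EQc) simp
  also have "\<dots> = s2 * (s2 * (t1 * (t1 * (t1 * (s1 * (s2 * (s2 * (s1 * (t2 * t1)))))))))"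
    by (simp add: P2_2 power2_eq_square mult.assoc cancel)
  also have "\<dots> = s2 * (s2 * (t1 * (t1 * (t1 * (t2 * (t2 * (z * (t2 * t1))))))))"
    by (simp only: Rom2)
  also have "\<dots> = P2 2 * (P1 (-3) * (P2 (-3) * (t1 * z)))"
    by (simp add: P2_2 ip_neg power3_eq_cube mult.assoc zpush)
  finally show ?thesis .
qed

lemma Eid: "s2 * s1^3 * s2^2 * s1^2 * s2^2 = t1 * (s2 * (P1 (-3) * (s2 * (z * z))))"
proof -
  have "s2 * s1^3 * s2^2 * s1^2 * s2^2 = s2 * (s1 * (s1 * (s1 * (s2 * (s2 * (s1 * (s1 * (s2 * s2))))))))"
    by (simp add: power3_eq_cube power2_eq_square mult.assoc)
  also have "\<dots> = s2 * (s1 * (s1 * (t2 * (t2 * (z * (s1 * (s2 * s2)))))))"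
    by (simp only: Rom2)
  also have "\<dots> = s2 * (s1 * (s1 * (s2 * (t2 * (t2 * (t2 * (s1 * (s2 * (s2 * z)))))))))"
    by (simp add: zpush cancel)
  also have "\<dots> = t1 * (t1 * (z * (t2 * (t2 * (t2 * (s1 * (s2 * (s2 * z))))))))"
    by (simp only: Rom)
  also have "\<dots> = t1 * (t1 * (P2 (-3) * (s1 * (s2 * (s2 * (z * z))))))"
    by (simp add: zpush ip_neg power3_eq_cube mult.assoc)
  also have "\<dots> = t1 * (t1 * (s1 * (s2 * (P1 (-3) * (s2 * (z * z))))))"
    by (simp only: RC1)
  also have "\<dots> = t1 * (s2 * (P1 (-3) * (s2 * (z * z))))"
    by (simp add: cancel)
  finally show ?thesis .
qed

lemma t3: "P1 (-3) = ei * (P1 2 - a * P1 1 - b - c * P1 (-1) - d * P1 (-2))"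
proof -
  have "P1 2 = s1^5 * P1 (-3)" using P1_add[of 5 "-3"] by (simp add: ip_pos)
  also have "\<dots> = a * (s1^4 * P1 (-3)) + b * (s1^3 * P1 (-3)) + c * (s1^2 * P1 (-3)) + d * (s1 * P1 (-3)) + e * P1 (-3)"
    by (simp add: q1 distrib_right mult.assoc)
  also have "\<dots> = a * P1 1 + b + c * P1 (-1) + d * P1 (-2) + e * P1 (-3)"
    using P1_add[of 4 "-3"] P1_add[of 3 "-3"] P1_add[of 2 "-3"] P1_add[of 1 "-3"] by (simp add: ip_pos)
  finally have "e * P1 (-3) = P1 2 - a * P1 1 - b - c * P1 (-1) - d * P1 (-2)" by (simp add: algebra_simps)
  then have "ei * (e * P1 (-3)) = ei * (P1 2 - a * P1 1 - b - c * P1 (-1) - d * P1 (-2))" by simp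
  then show ?thesis by (simp add: mult.assoc[symmetric] eie)
qed

lemma w3: "s1^3 * (s2 * s1^2 * s2)^3 = t1 * (t1 * (t1 * (z * (z * z))))"
proof -
  have w: "s2 * s1^2 * s2 = t1 * (t1 * z)" using om by (simp add: power2_eq_square mult.assoc)
  have "s1^3 * (s2 * s1^2 * s2)^3 = s1 * (s1 * (s1 * (t1 * (t1 * (z * (t1 * (t1 * (z * (t1 * (t1 * z))))))))))"
    unfolding w by (simp add: power3_eq_cube mult.assoc)
  also have "\<dots> = t1 * (t1 * (t1 * (z * (z * z))))" by (simp add: zpush cancel)
  finally show ?thesis .
qed

end



context h5 begin

lemma bu1: "bimod u1" by (rule ualg_bimod[OF s1t1 t1s1 q1])
lemma bu2: "bimodg s2 t2 u2" by (rule ualg_bimod[OF s2t2 t2s2 q2])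
lemma one_u1: "1 \<in> u1" using ualg_pow[of s1 0] by simp
lemma one_u2: "1 \<in> u2" using ualg_pow[of s2 0] by simp
lemma P1_u1: "P1 n \<in> u1" using bimodg_ip(1)[OF bu1 one_u1, of n] by simp
lemma P2_u2: "P2 n \<in> u2" using bimodg_ip(1)[OF bu2 one_u2, of n] by simp

lemma bimod_sub: "bimod M \<Longrightarrow> sub M" by (simp add: bimodg_def)
lemma bimod_cl: assumes "bimod M" "x \<in> M"
  shows "s1 * x \<in> M" "x * s1 \<in> M" "t1 * x \<in> M" "x * t1 \<in> M"
  using assms by (auto simp: bimodg_def)

lemma lcl_mprod:
  assumes "\<And>x. x \<in> A \<Longrightarrow> g * x \<in> A" and "y \<in> mprod R A B"
  shows "g * y \<in> mprod R A B"
proof -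
  have "g * y * 1 \<in> mprod R A B"
    by (rule mprod_map[OF mprod_sub _ assms(2)]) (simp add: mult.assoc[symmetric] mprod_mem assms(1))
  then show ?thesis by simp
qed

lemma rcl_mprod:
  assumes "\<And>x. x \<in> B \<Longrightarrow> x * g \<in> B" and "y \<in> mprod R A B"
  shows "y * g \<in> mprod R A B"
proof -
  have "1 * y * g \<in> mprod R A B"
    by (rule mprod_map[OF mprod_sub _ assms(2)]) (simp add: mult.assoc mprod_mem assms(1))
  then show ?thesis by simp
qed

lemma rcl_mprod1:
  assumes "w * g = g * w" and "\<And>x. x \<in> A \<Longrightarrow> x * g \<in> A" and "y \<in> mprod R A {w}"
  shows "y * g \<in> mprod R A {w}"
proof -
  have "1 * y * g \<in> mprod R A {w}"
  proof (rule mprod_map[OF mprod_sub _ assms(3)])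
    fix x v assume "x \<in> A" "v \<in> {w}"
    then have "1 * (x * v) * g = (x * g) * w" by (simp add: mult.assoc assms(1))
    then show "1 * (x * v) * g \<in> mprod R A {w}" using \<open>x \<in> A\<close> by (simp add: mprod_mem assms(2))
  qed
  then show ?thesis by simp
qed

lemma bimod_Au1:
  assumes "\<And>x. x \<in> A \<Longrightarrow> s1 * x \<in> A" "\<And>x. x \<in> A \<Longrightarrow> t1 * x \<in> A"
  shows "bimod (mprod R A u1)"
  unfolding bimodg_def
  using mprod_sub lcl_mprod[OF assms(1)] lcl_mprod[OF assms(2)]
    rcl_mprod[of u1 s1] rcl_mprod[of u1 t1] bimod_cl[OF bu1]
  by blast

lemma lu1: "x \<in> u1 \<Longrightarrow> s1 * x \<in> u1" "x \<in> u1 \<Longrightarrow> t1 * x \<in> u1"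
  using bimod_cl[OF bu1] by auto

lemma lcl_u1X: "y \<in> mprod R u1 X \<Longrightarrow> s1 * y \<in> mprod R u1 X" "y \<in> mprod R u1 X \<Longrightarrow> t1 * y \<in> mprod R u1 X"
  using lcl_mprod[of u1 s1] lcl_mprod[of u1 t1] lu1 by auto

lemma bimod_u1Yu1: "bimod (mprod R (mprod R u1 Y) u1)"
  by (rule bimod_Au1) (simp_all add: lcl_u1X)

lemma bimod_w:
  assumes "w * s1 = s1 * w" "w * t1 = t1 * w"
  shows "bimod (mprod R u1 {w})"
  unfolding bimodg_def
  using mprod_sub lcl_u1X rcl_mprod1[OF assms(1), of u1] rcl_mprod1[OF assms(2), of u1] bimod_cl[OF bu1]
  by blast

lemma bimod_sandw: "bimod (sandw R u1 w)"
  unfolding sandw_def by (rule bimod_u1Yu1)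

lemma msums_bimod:
  assumes "\<And>N. N \<in> set Ms \<Longrightarrow> bimod N"
  shows "bimod (msums Ms)"
proof -
  have S: "\<And>N. N \<in> set Ms \<Longrightarrow> sub N" using assms bimod_sub by blast
  have m: "L * x * Rr \<in> msums Ms" if "x \<in> msums Ms" "\<And>N y. N \<in> set Ms \<Longrightarrow> y \<in> N \<Longrightarrow> L * y * Rr \<in> N" for x L Rr
    by (rule msums_map[OF S that(2) that(1)])
  show ?thesis unfolding bimodg_def
  proof (intro conjI ballI msums_sub S)
    fix x assume x: "x \<in> msums Ms"
    show "s1 * x \<in> msums Ms" using m[OF x, of s1 1] assms bimod_cl by simp
    show "x * s1 \<in> msums Ms" using m[OF x, of 1 s1] assms bimod_cl by simp
    show "t1 * x \<in> msums Ms" using m[OF x, of t1 1] assms bimod_cl by simp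
    show "x * t1 \<in> msums Ms" using m[OF x, of 1 t1] assms bimod_cl by simp
  qed (simp)
qed

definition "om1 = s2 * s1^2 * s2"
definition "omi = t2 * t1^2 * t2"

lemma om1_eq: "om1 = t1 * (t1 * z)" unfolding om1_def using om by (simp add: power2_eq_square mult.assoc)
lemma om1_s1: "om1 * s1 = s1 * om1" "om1 * t1 = t1 * om1"
  unfolding om1_eq by (simp_all add: mult.assoc zpush cancel)
lemma omi_om1: "omi * om1 = 1" "om1 * omi = 1"
  unfolding om1_def omi_def by (simp_all add: mult.assoc cancel power2_eq_square)
lemma omi_s1: "omi * s1 = s1 * omi" "omi * t1 = t1 * omi"
  using comm_inv[of s1 om1 omi] comm_inv[of t1 om1 omi] om1_s1 omi_om1 by auto

lemma pw2comm: fixes g s :: 'a shows "g * s = s * g \<Longrightarrow> s^2 * g = g * s^2"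
  using pow_comm[of g s 2] by simp

end



context h5 begin

lemma lay_u: "sub M \<Longrightarrow> (\<And>k. L * s^k * Rr \<in> M) \<Longrightarrow> p \<in> ualg R s \<Longrightarrow> L * p * Rr \<in> M"
  unfolding ualg_def by (rule span_map) auto

lemma ip_int: "ip s t (int n) = s ^ n" by (simp add: ip_def)

lemma S3_in:
  assumes bm: "bimod M" and h: "\<And>x y w. IN M [x,y,w] 0"
    and v: "v \<in> mprod R (mprod R (mprod R (mprod R u1 u2) u1) u2) u1"
  shows "v \<in> M"
proof -
  have sM: "sub M" using bm by (rule bimod_sub)
  have A: "s1^i * s2^j * s1^k * s2^l * s1^m \<in> M" for i j k l m
  proof -
    have "s2^j * s1^k * s2^l \<in> M" using h[of "int j" "int k" "int l"] by (simp add: IN_def ip_int mult.assoc)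
    then have "s1^i * (s2^j * s1^k * s2^l) * s1^m \<in> M" using bimodg_pow[OF bm] by blast
    then show ?thesis by (simp add: mult.assoc)
  qed
  have c1: "p * q * s1^k * s2^l * s1^m \<in> M" if "p \<in> u1" "q \<in> u2" for p q k l m
  proof -
    have "s1^i * q * (s1^k * s2^l * s1^m) \<in> M" for i
      by (rule lay_u[OF sM _ that(2)]) (use A in \<open>simp add: mult.assoc\<close>)
    then have "1 * p * (q * (s1^k * s2^l * s1^m)) \<in> M"
      by (intro lay_u[OF sM _ that(1)]) (simp add: mult.assoc)
    then show ?thesis by (simp add: mult.assoc)
  qed
  have c2: "x * s1^k * s2^l * s1^m \<in> M" if "x \<in> mprod R u1 u2" for x k l m
  proof -
    have "1 * x * (s1^k * s2^l * s1^m) \<in> M"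
      by (rule mprod_map[OF sM _ that]) (use c1 in \<open>simp add: mult.assoc\<close>)
    then show ?thesis by (simp add: mult.assoc)
  qed
  have c3: "x * r * s2^l * s1^m \<in> M" if "x \<in> mprod R u1 u2" "r \<in> u1" for x r l m
  proof -
    have "x * r * (s2^l * s1^m) \<in> M"
      by (rule lay_u[OF sM _ that(2)]) (use c2[OF that(1)] in \<open>simp add: mult.assoc\<close>)
    then show ?thesis by (simp add: mult.assoc)
  qed
  have c4: "x * s2^l * s1^m \<in> M" if "x \<in> mprod R (mprod R u1 u2) u1" for x l m
  proof -
    have "1 * x * (s2^l * s1^m) \<in> M"
      by (rule mprod_map[OF sM _ that]) (use c3 in \<open>simp add: mult.assoc\<close>)
    then show ?thesis by (simp add: mult.assoc)
  qed
  have c5: "x * q * s1^m \<in> M" if "x \<in> mprod R (mprod R u1 u2) u1" "q \<in> u2" for x q m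
    by (rule lay_u[OF sM _ that(2)]) (use c4[OF that(1)] in \<open>simp add: mult.assoc\<close>)
  have c6: "x * s1^m \<in> M" if "x \<in> mprod R (mprod R (mprod R u1 u2) u1) u2" for x m
  proof -
    have "1 * x * s1^m \<in> M"
      by (rule mprod_map[OF sM _ that]) (use c5 in \<open>simp add: mult.assoc\<close>)
    then show ?thesis by simp
  qed
  have c7: "x * r \<in> M" if "x \<in> mprod R (mprod R (mprod R u1 u2) u1) u2" "r \<in> u1" for x r
  proof -
    have "x * r * 1 \<in> M"
      by (rule lay_u[OF sM _ that(2)]) (use c6[OF that(1)] in simp)
    then show ?thesis by simp
  qed
  have "1 * v * 1 \<in> M"
    by (rule mprod_map[OF sM _ v]) (use c7 in simp)
  then show ?thesis by simp
qed

lemma S1_in: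
  assumes bm: "bimod M" and h: "\<And>m. IN M [m] 2"
    and v: "v \<in> mprod R (mprod R (mprod R (mprod R u1 {s2}) u1) {s2 * s1^3 * s2}) u1"
  shows "v \<in> M"
proof -
  have sM: "sub M" using bm by (rule bimod_sub)
  have A: "s2 * s1^k * (s2 * s1^3 * s2) \<in> M" for k
  proof -
    have e: "s2 * s1^k * (s2 * s1^3 * s2) = t1 * (P2 (int k - 3) * (t1 * (t1 * (z * z))))"
      using Fid[of "int k"] by (simp add: ip_int power3_eq_cube mult.assoc)
    have "P2 (int k - 3) * Z 2 \<in> M" using h[of "int k - 3"] by (simp add: IN_def)
    then have "t1 * (P2 (int k - 3) * Z 2) * (t1 * t1) \<in> M" using bimodg_pow[OF bm, of _ 1] bimodg_pow[OF bm, of _ 2]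
      by (metis power_one_right power2_eq_square)
    moreover have "t1 * (P2 (int k - 3) * Z 2) * (t1 * t1) = t1 * (P2 (int k - 3) * (t1 * (t1 * (z * z))))"
      by (simp add: mult.assoc ip_pos power2_eq_square zpush)
    ultimately show ?thesis using e by simp
  qed
  have c1: "p * s2 * s1^k * (s2 * s1^3 * s2) \<in> M" if "p \<in> u1" for p k
  proof -
    have "1 * p * (s2 * s1^k * (s2 * s1^3 * s2)) \<in> M"
      by (rule lay_u[OF sM _ that]) (use A bimodg_pow[OF bm] in \<open>simp add: mult.assoc\<close>)
    then show ?thesis by (simp add: mult.assoc)
  qed
  have c2: "x * s1^k * (s2 * s1^3 * s2) \<in> M" if "x \<in> mprod R u1 {s2}" for x k
  proof -
    have "1 * x * (s1^k * (s2 * s1^3 * s2)) \<in> M"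
      by (rule mprod_map[OF sM _ that]) (use c1 in \<open>simp add: mult.assoc\<close>)
    then show ?thesis by (simp add: mult.assoc)
  qed
  have c3: "x * r * (s2 * s1^3 * s2) \<in> M" if "x \<in> mprod R u1 {s2}" "r \<in> u1" for x r
    by (rule lay_u[OF sM _ that(2)]) (use c2[OF that(1)] in simp)
  have c4: "x * (s2 * s1^3 * s2) \<in> M" if "x \<in> mprod R (mprod R u1 {s2}) u1" for x
  proof -
    have "1 * x * (s2 * s1^3 * s2) \<in> M"
      by (rule mprod_map[OF sM _ that]) (use c3 in simp)
    then show ?thesis by simp
  qed
  have c5: "x * r \<in> M" if "x \<in> mprod R (mprod R (mprod R u1 {s2}) u1) {s2 * s1^3 * s2}" "r \<in> u1" for x r
  proof -
    have "1 * x * 1 \<in> M" by (rule mprod_map[OF sM _ that(1)]) (use c4 in simp)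
    then show ?thesis using bimodg_alg[OF bm _ that(2)] by simp
  qed
  have "1 * v * 1 \<in> M" by (rule mprod_map[OF sM _ v]) (use c5 in simp)
  then show ?thesis by simp
qed

lemma S2_in:
  assumes bm: "bimod M" and h: "IN M [2,2,-3] 1"
    and v: "v \<in> sandw R u1 (s2^2 * s1^3 * s2 * t1 * s2)"
  shows "v \<in> M"
proof -
  have sM: "sub M" using bm by (rule bimod_sub)
  have G: "s2^2 * s1^3 * s2 * t1 * s2 = P2 2 * (P1 2 * (P2 (-3) * (t1 * z)))"
    using Gid by (simp add: power2_eq_square power3_eq_cube mult.assoc)
  have "wdg True [2,2,-3] * Z 1 \<in> M" using h by (simp add: IN_def)
  then have "wdg True [2,2,-3] * Z 1 * t1 \<in> M" using bimod_cl[OF bm] by blast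
  moreover have "wdg True [2,2,-3] * Z 1 * t1 = s2^2 * s1^3 * s2 * t1 * s2"
    unfolding G by (simp add: mult.assoc z_t1)
  ultimately have g: "s2^2 * s1^3 * s2 * t1 * s2 \<in> M" by simp
  have c1: "x * r \<in> M" if "x \<in> mprod R u1 {s2^2 * s1^3 * s2 * t1 * s2}" "r \<in> u1" for x r
  proof -
    have "1 * x * 1 \<in> M" by (rule mprod_map[OF sM _ that(1)]) (use g bimodg_alg[OF bm] in auto)
    then show ?thesis using bimodg_alg[OF bm _ that(2)] by simp
  qed
  have "1 * v * 1 \<in> M" by (rule mprod_map[OF sM _ v[unfolded sandw_def]]) (use c1 in simp)
  then show ?thesis by simp
qed

end



context h5 begin

definition "UpL = [mprod R (mprod R u1 u2) u1, mprod R u1 {om1}, mprod R u1 {omi},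
            sandw R u1 (t2 * s1^2 * t2), sandw R u1 (s2 * t1^2 * s2), sandw R u1 (s2^2 * s1^2 * s2^2),
            sandw R u1 (t2^2 * t1^2 * t2^2), sandw R u1 (s2 * t1^2 * s2^2), sandw R u1 (t2 * s1^2 * t2^2),
            sandw R u1 (t2 * s1 * t2), sandw R u1 (s2 * t1 * s2), sandw R u1 (t2^2 * t1^2 * s2^2),
            sandw R u1 (s2^2 * s1^2 * t2^2), sandw R u1 (s2^2 * t1^2 * s2^2), sandw R u1 (t2^2 * s1^2 * t2^2),
            sandw R u1 (t2^2 * s1 * t2), sandw R u1 (t2 * s1 * t2^2)]"

definition "UdL = [Uprime R s1 s2 t1 t2, mprod R u1 {om1^2}, mprod R u1 {omi^2},
            sandw R u1 (t2^2 * s1^2 * t2 * s1 * t2), sandw R u1 (s2^2 * t1^2 * s2 * t1 * s2),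
            sandw R u1 (s2 * t1^2 * s2^2 * t1^2 * s2^2), sandw R u1 (t2 * s1^2 * t2^2 * s1^2 * t2^2)]"

abbreviation "Udp \<equiv> Udprime R s1 s2 t1 t2"

lemma Up_eq: "Uprime R s1 s2 t1 t2 = msums UpL"
  by (simp add: Uprime_def UpL_def Let_def om1_def omi_def)
lemma Ud_eq: "Udp = msums UdL"
  by (simp add: Udprime_def UdL_def Let_def om1_def omi_def)

lemma bimod_UpL: "N \<in> set UpL \<Longrightarrow> bimod N"
  unfolding UpL_def using bimod_u1Yu1 bimod_sandw bimod_w om1_s1 omi_s1 by auto

lemma bimod_Up: "bimod (Uprime R s1 s2 t1 t2)"
  unfolding Up_eq by (rule msums_bimod) (rule bimod_UpL)

lemma bimod_UdL: "N \<in> set UdL \<Longrightarrow> bimod N"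
proof -
  have a: "om1^2 * s1 = s1 * om1^2" "om1^2 * t1 = t1 * om1^2" "omi^2 * s1 = s1 * omi^2" "omi^2 * t1 = t1 * omi^2"
    using pw2comm[of s1 om1] pw2comm[of t1 om1] pw2comm[of s1 omi] pw2comm[of t1 omi] om1_s1 omi_s1
    by auto
  assume "N \<in> set UdL"
  then show ?thesis unfolding UdL_def using bimod_Up bimod_sandw bimod_w[OF a(1,2)] bimod_w[OF a(3,4)] by auto
qed

lemma bimod_Ud: "bimod Udp"
  unfolding Ud_eq by (rule msums_bimod) (rule bimod_UdL)

lemma inUd: "N \<in> set UdL \<Longrightarrow> x \<in> N \<Longrightarrow> x \<in> Udp"
  unfolding Ud_eq by (rule msums_mem) (auto intro: bimod_sub bimod_UdL)
lemma inUp: "N \<in> set UpL \<Longrightarrow> x \<in> N \<Longrightarrow> x \<in> Udp"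
proof -
  assume "N \<in> set UpL" "x \<in> N"
  then have "x \<in> Uprime R s1 s2 t1 t2" unfolding Up_eq by (rule msums_mem[rotated]) (auto intro: bimod_sub bimod_UpL)
  then show ?thesis by (rule inUd[rotated]) (simp add: UdL_def)
qed

lemma sandw_in: "g \<in> sandw R u1 g"
  unfolding sandw_def using mprod_mem[OF mprod_mem[OF one_u1, of g "{g}"] one_u1] by simp

lemma w_in: "x \<in> u1 \<Longrightarrow> x * g \<in> mprod R u1 {g}" by (rule mprod_mem) auto

lemma Ud_leaves:
  shows "\<And>x. IN Udp [x] 0" "IN Udp [] 0" "IN Udp [] 1" "IN Udp [] (-1)" "IN Udp [] 2" "IN Udp [] (-2)"
    "IN Udp [-1, 2, -1] 0" "IN Udp [1, -2, 1] 0" "IN Udp [2, 2, 2] 0" "IN Udp [-2, -2, -2] 0"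
    "IN Udp [1, -2, 2] 0" "IN Udp [-1, 2, -2] 0" "IN Udp [-1, 1, -1] 0" "IN Udp [1, -1, 1] 0"
    "IN Udp [-2, -2, 2] 0" "IN Udp [2, 2, -2] 0" "IN Udp [2, -2, 2] 0" "IN Udp [-2, 2, -2] 0"
    "IN Udp [-2, 1, -1] 0" "IN Udp [-1, 1, -2] 0" "IN Udp [-2, 3, 3] (-1)" "IN Udp [2, -3, -3] 1"
proof -
  have u1u2u1: "x \<in> mprod R (mprod R u1 u2) u1 \<Longrightarrow> x \<in> Udp" for x by (rule inUp) (simp_all add: UpL_def)
  show "IN Udp [x] 0" for x
    using u1u2u1[OF mprod_mem[OF mprod_mem[OF one_u1 P2_u2[of x]] one_u1]] by (simp add: IN_def)
  show "IN Udp [] 0"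
    using u1u2u1[OF mprod_mem[OF mprod_mem[OF one_u1 one_u2] one_u1]] by (simp add: IN_def)
  have sw: "g \<in> Udp" if "sandw R u1 g \<in> set UpL" for g by (rule inUp[OF that sandw_in])
  have z1: "z = s1^2 * om1" unfolding om1_eq by (simp add: power2_eq_square mult.assoc cancel)
  have "s1^2 * om1 \<in> Udp" by (rule inUp[OF _ w_in[OF ualg_pow]]) (simp add: UpL_def)
  then show "IN Udp [] 1" using z1 by (simp add: IN_def)
  have zi1: "zi = t1^2 * omi"
  proof -
    have oc: "omi * (s1 * X) = s1 * (omi * X)" for X by (simp add: mult.assoc[symmetric] omi_s1(1))
    have "t1^2 * omi * z = t1^2 * (omi * (s1 * (s1 * om1)))" unfolding z1 by (simp add: power2_eq_square mult.assoc)
    also have "\<dots> = t1 * (t1 * (s1 * (s1 * (omi * om1))))" by (simp add: power2_eq_square mult.assoc oc)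
    also have "\<dots> = 1" by (simp add: omi_om1 cancel)
    finally have "t1^2 * omi * z = 1" .
    then have "t1^2 * omi * (z * zi) = zi" by (simp add: mult.assoc[symmetric])
    then show ?thesis by (simp add: z_zi)
  qed
  have t1u: "t1^2 \<in> u1" using P1_u1[of "-2"] by (simp add: ip_neg)
  have "t1^2 * omi \<in> Udp" by (rule inUp[OF _ w_in[OF t1u]]) (simp add: UpL_def)
  then show "IN Udp [] (-1)" using zi1 by (simp add: IN_def)
  have z2: "z^2 = s1^4 * om1^2"
    unfolding om1_eq by (simp add: power2_eq_square mult.assoc cancel zpush numeral_eq_Suc)
  have "s1^4 * om1^2 \<in> Udp" by (rule inUd[OF _ w_in[OF ualg_pow]]) (simp add: UdL_def)
  then show "IN Udp [] 2" using z2 by (simp add: IN_def ip_pos)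
  have zi2: "zi^2 = t1^4 * omi^2"
  proof -
    have oc2: "omi * (t1 * X) = t1 * (omi * X)" for X by (simp add: mult.assoc[symmetric] omi_s1(2))
    have "zi^2 = t1 * (t1 * (omi * (t1 * (t1 * omi))))" unfolding zi1 by (simp add: power2_eq_square mult.assoc)
    also have "\<dots> = t1 * (t1 * (t1 * (t1 * (omi * omi))))" by (simp add: oc2)
    finally show ?thesis by (simp add: power2_eq_square mult.assoc numeral_eq_Suc)
  qed
  have t4u: "t1^4 \<in> u1" using P1_u1[of "-4"] by (simp add: ip_neg)
  have "t1^4 * omi^2 \<in> Udp" by (rule inUd[OF _ w_in[OF t4u]]) (simp add: UdL_def)
  then show "IN Udp [] (-2)" using zi2 by (simp add: IN_def ip_neg)
  show "IN Udp [-1, 2, -1] 0" using sw[of "t2 * s1^2 * t2"] by (simp add: IN_def UpL_def ip_pos ip_neg mult.assoc)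
  show "IN Udp [1, -2, 1] 0" using sw[of "s2 * t1^2 * s2"] by (simp add: IN_def UpL_def ip_pos ip_neg mult.assoc)
  show "IN Udp [2, 2, 2] 0" using sw[of "s2^2 * s1^2 * s2^2"] by (simp add: IN_def UpL_def ip_pos ip_neg mult.assoc)
  show "IN Udp [-2, -2, -2] 0" using sw[of "t2^2 * t1^2 * t2^2"] by (simp add: IN_def UpL_def ip_pos ip_neg mult.assoc)
  show "IN Udp [1, -2, 2] 0" using sw[of "s2 * t1^2 * s2^2"] by (simp add: IN_def UpL_def ip_pos ip_neg mult.assoc)
  show "IN Udp [-1, 2, -2] 0" using sw[of "t2 * s1^2 * t2^2"] by (simp add: IN_def UpL_def ip_pos ip_neg mult.assoc)
  show "IN Udp [-1, 1, -1] 0" using sw[of "t2 * s1 * t2"] by (simp add: IN_def UpL_def ip_pos ip_neg mult.assoc)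
  show "IN Udp [1, -1, 1] 0" using sw[of "s2 * t1 * s2"] by (simp add: IN_def UpL_def ip_pos ip_neg mult.assoc)
  show "IN Udp [-2, -2, 2] 0" using sw[of "t2^2 * t1^2 * s2^2"] by (simp add: IN_def UpL_def ip_pos ip_neg mult.assoc)
  show "IN Udp [2, 2, -2] 0" using sw[of "s2^2 * s1^2 * t2^2"] by (simp add: IN_def UpL_def ip_pos ip_neg mult.assoc)
  show "IN Udp [2, -2, 2] 0" using sw[of "s2^2 * t1^2 * s2^2"] by (simp add: IN_def UpL_def ip_pos ip_neg mult.assoc)
  show "IN Udp [-2, 2, -2] 0" using sw[of "t2^2 * s1^2 * t2^2"] by (simp add: IN_def UpL_def ip_pos ip_neg mult.assoc)
  show "IN Udp [-2, 1, -1] 0" using sw[of "t2^2 * s1 * t2"] by (simp add: IN_def UpL_def ip_pos ip_neg mult.assoc)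
  show "IN Udp [-1, 1, -2] 0" using sw[of "t2 * s1 * t2^2"] by (simp add: IN_def UpL_def ip_pos ip_neg mult.assoc)
  have A: "t2^2 * s1^2 * t2 * s1 * t2 \<in> Udp" by (rule inUd[OF _ sandw_in]) (simp add: UdL_def)
  have "t2^2 * s1^2 * t2 * s1 * t2 * t1 \<in> Udp" using bimod_cl(4)[OF bimod_Ud A] .
  moreover have "t2^2 * s1^2 * t2 * s1 * t2 * t1 = wdg True [-2, 3, 3] * Z (-1)"
    unfolding Aid by (simp add: mult.assoc zi_t1 cancel)
  ultimately show "IN Udp [-2, 3, 3] (-1)" by (simp add: IN_def)
  have B: "s2^2 * t1^2 * s2 * t1 * s2 \<in> Udp" by (rule inUd[OF _ sandw_in]) (simp add: UdL_def)
  have "s2^2 * t1^2 * s2 * t1 * s2 * s1 \<in> Udp" using bimod_cl(2)[OF bimod_Ud B] .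
  moreover have "s2^2 * t1^2 * s2 * t1 * s2 * s1 = wdg True [2, -3, -3] * Z 1"
    unfolding Bid by (simp add: mult.assoc z_s1 cancel)
  ultimately show "IN Udp [2, -3, -3] 1" by (simp add: IN_def)
qed

end



context h5 begin

lemma scei: "L * (ei * y) = ei * (L * y)" by (rule central2) simp

lemma lin:
  "L * (ei * (A - a * B - b - c * C - d * Dd) * Rr) =
   ei * (L * A * Rr) - (ei * a) * (L * B * Rr) - (ei * b) * (L * Rr) - (ei * c) * (L * C * Rr) - (ei * d) * (L * Dd * Rr)"
proof -
  have 1: "L * (ei * X * Rr) = ei * (L * X * Rr)" for X by (simp add: mult.assoc scei)
  have 2: "L * (A - a * B - b - c * C - d * Dd) * Rr = L * A * Rr - a * (L * B * Rr) - b * (L * Rr) - c * (L * C * Rr) - d * (L * Dd * Rr)"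
    by (simp add: left_diff_distrib right_diff_distrib sca scb scc scd mult.assoc cb[of L, symmetric])
  have 3: "ei * (U1 - a * V1 - b * V2 - c * V3 - d * V4) = ei * U1 - (ei * a) * V1 - (ei * b) * V2 - (ei * c) * V3 - (ei * d) * V4"
    for U1 V1 V2 V3 V4 by (simp add: right_diff_distrib mult.assoc)
  show ?thesis unfolding 1 2 3 ..
qed

lemma h5m_inst: "bimod M \<Longrightarrow> h5m a b c d e ei s1 s2 t1 t2 M"
  by (intro h5m.intro h5m_axioms.intro) (unfold_locales; fact)+

lemma main:
  "(let R = scalars a b c d e ei; u1 = ualg R s1; u2 = ualg R s2;
          w = s2 * s1^2 * s2;
          W = {x * w ^ 3 | x. x \<in> units_in u1};
          X = msums [mprod R (mprod R (mprod R (mprod R u1 {s2}) u1) {s2 * s1^3 * s2}) u1,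
                     sandw R u1 (s2^2 * s1^3 * s2 * t1 * s2),
                     mprod R (mprod R (mprod R (mprod R u1 u2) u1) u2) u1,
                     W]
      in s2 * s1^3 * s2^2 * s1^2 * s2^2 \<in> X \<and> X \<subseteq> msums [W, Udprime R s1 s2 t1 t2])"
proof -
  define S1 where "S1 = mprod R (mprod R (mprod R (mprod R u1 {s2}) u1) {s2 * s1^3 * s2}) u1"
  define S2 where "S2 = sandw R u1 (s2^2 * s1^3 * s2 * t1 * s2)"
  define S3 where "S3 = mprod R (mprod R (mprod R (mprod R u1 u2) u1) u2) u1"
  define W where "W = {x * (s2 * s1^2 * s2) ^ 3 | x. x \<in> units_in u1}"
  define Y where "Y = msums [S1, S2, S3]"
  have lA1: "x \<in> mprod R (mprod R (mprod R u1 {s2}) u1) {s2 * s1^3 * s2} \<Longrightarrow> g \<in> {s1, t1} \<Longrightarrow>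
      g * x \<in> mprod R (mprod R (mprod R u1 {s2}) u1) {s2 * s1^3 * s2}" for x g
    using lcl_mprod[of "mprod R (mprod R u1 {s2}) u1" g] lcl_mprod[of "mprod R u1 {s2}" g] lcl_u1X by blast
  have lA3: "x \<in> mprod R (mprod R (mprod R u1 u2) u1) u2 \<Longrightarrow> g \<in> {s1, t1} \<Longrightarrow>
      g * x \<in> mprod R (mprod R (mprod R u1 u2) u1) u2" for x g
    using lcl_mprod[of "mprod R (mprod R u1 u2) u1" g] lcl_mprod[of "mprod R u1 u2" g] lcl_u1X by blast
  have bS1: "bimod S1" unfolding S1_def by (rule bimod_Au1) (use lA1 in auto)
  have bS2: "bimod S2" unfolding S2_def by (rule bimod_sandw)
  have bS3: "bimod S3" unfolding S3_def by (rule bimod_Au1) (use lA3 in auto)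
  have bY: "bimod Y" unfolding Y_def by (rule msums_bimod) (use bS1 bS2 bS3 in auto)
  have subs: "\<And>N. N \<in> set [S1, S2, S3] \<Longrightarrow> sub N" using bS1 bS2 bS3 bimod_sub by auto
  interpret Yi: h5m a b c d e ei s1 s2 t1 t2 Y by (rule h5m_inst[OF bY])
  have inY1: "x \<in> S1 \<Longrightarrow> x \<in> Y" for x unfolding Y_def by (rule msums_mem[OF subs]) auto
  have inY2: "x \<in> S2 \<Longrightarrow> x \<in> Y" for x unfolding Y_def by (rule msums_mem[OF subs]) auto
  have inY3: "x \<in> S3 \<Longrightarrow> x \<in> Y" for x unfolding Y_def by (rule msums_mem[OF subs]) auto
  have y3: "IN Y [x,y,w] 0" for x y w
  proof -
    have "1 * P2 x * P1 y * P2 w * 1 \<in> S3" unfolding S3_def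
      by (intro mprod_mem one_u1 P1_u1 P2_u2)
    then show ?thesis using inY3 by (simp add: IN_def mult.assoc)
  qed
  have y2: "IN Y [x] 0" for x
  proof -
    have "1 * P2 x * 1 * 1 * 1 \<in> S3" unfolding S3_def
      by (intro mprod_mem one_u1 one_u2 P2_u2)
    then show ?thesis using inY3 by (simp add: IN_def)
  qed
  have y0: "IN Y [] 0"
  proof -
    have "1 * 1 * 1 * 1 * 1 \<in> S3" unfolding S3_def
      by (intro mprod_mem one_u1 one_u2)
    then show ?thesis using inY3 by (simp add: IN_def)
  qed
  have y22: "IN Y [x] 2" for x
  proof -
    have "1 * s2 * P1 (x+3) * (s2 * s1^3 * s2) * 1 \<in> S1" unfolding S1_def
      by (intro mprod_mem one_u1 P1_u1) simp_all
    then have "s2 * (P1 (x+3) * (s2 * (s1 * (s1 * (s1 * s2))))) \<in> Y" using inY1 by (simp add: mult.assoc power3_eq_cube)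
    then have "t1 * (P2 x * (t1 * (t1 * (z * z)))) \<in> Y" using Fid[of "x+3"] by simp
    then have "s1 * (t1 * (P2 x * (t1 * (t1 * (z * z))))) * s1 * s1 \<in> Y" by (intro bimod_cl(1,2)[OF bY])
    moreover have "s1 * (t1 * (P2 x * (t1 * (t1 * (z * z))))) * s1 * s1 = P2 x * (z * z)"
    proof -
      have "s1 * (t1 * (P2 x * (t1 * (t1 * (z * z))))) * s1 * s1 = P2 x * (t1 * (t1 * (z * (z * (s1 * s1)))))"
        by (simp only: c11 mult.assoc)
      also have "\<dots> = P2 x * (t1 * (t1 * (s1 * (s1 * (z * z)))))" by (simp only: zpush)
      also have "\<dots> = P2 x * (z * z)" by (simp only: c12)
      finally show ?thesis .
    qed
    moreover have "wdg True [x] * Z 2 = P2 x * (z * z)" by (simp add: ip_pos power2_eq_square)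
    ultimately show ?thesis by (simp add: IN_def)
  qed
  have yG: "IN Y [2, 2, -3] 1"
  proof -
    have "s2^2 * s1^3 * s2 * t1 * s2 \<in> Y" using inY2[unfolded S2_def, OF sandw_in] .
    then have "s2^2 * s1^3 * s2 * t1 * s2 * s1 \<in> Y" using bimod_cl[OF bY] by blast
    moreover have "s2^2 * s1^3 * s2 * t1 * s2 * s1 = wdg True [2, 2, -3] * Z 1"
      using Gid by (simp add: power2_eq_square power3_eq_cube mult.assoc z_s1 cancel)
    ultimately show ?thesis by (simp add: IN_def)
  qed
  note YD = Yi.derivY[OF y3 y2 y0 y22 yG]
  define T where "T j = t1 * (s2 * (P1 j * (s2 * (z * z))))" for j
  have T0: "t1 * (s2 * (s2 * (z * z))) = T 0" by (simp add: T_def)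
  have TY: "T 1 \<in> Y" "T 0 \<in> Y" "T (-1) \<in> Y" "T (-2) \<in> Y"
  proof -
    have "t1 * (wdg True [1,1,1] * Z 2) \<in> Y" "t1 * (wdg True [2] * Z 2) \<in> Y"
         "t1 * (wdg True [1,-1,1] * Z 2) \<in> Y" "t1 * (wdg True [1,-2,1] * Z 2) \<in> Y"
      using YD bimod_cl(3)[OF bY] by (simp_all add: IN_def)
    then show "T 1 \<in> Y" "T 0 \<in> Y" "T (-1) \<in> Y" "T (-2) \<in> Y"
      by (simp_all add: T_def mult.assoc ip_pos ip_neg power2_eq_square)
  qed
  define u where "u = ei * s1^3"
  have E: "s2 * s1^3 * s2^2 * s1^2 * s2^2 = ei * T 2 - (ei * a) * T 1 - (ei * b) * T 0 - (ei * c) * T (-1) - (ei * d) * T (-2)"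
    unfolding Eid T_def t3 using lin[of "t1 * s2" "P1 2" "P1 1" "P1 (-1)" "P1 (-2)" "s2 * (z * z)"]
    by (simp add: mult.assoc)
  have T2: "ei * T 2 = u * (s2 * s1^2 * s2) ^ 3"
  proof -
    have "T 2 = t1 * (t1 * (t1 * (z * (z * z))))" by (simp add: T_def P1_2 mult.assoc Rom)
    then show ?thesis unfolding u_def using w3 by (simp add: mult.assoc)
  qed
  define yv where "yv = - ((ei * a) * T 1 + (ei * b) * T 0 + (ei * c) * T (-1) + (ei * d) * T (-2))"
  have Edec: "s2 * s1^3 * s2^2 * s1^2 * s2^2 = u * (s2 * s1^2 * s2) ^ 3 + yv"
    unfolding E T2[symmetric] yv_def by (simp add: algebra_simps)
  have sY: "sub Y" using bY bimod_sub by blast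
  have yvY: "yv \<in> Y" unfolding yv_def using TY
    by (intro subneg[OF sY] subadd[OF sY] subsmul[OF sY]) auto
  have uU: "u \<in> units_in u1"
  proof -
    have uu: "u \<in> u1" unfolding u_def by (intro subsmul[OF ualg_sub] ualg_pow) simp
    have vu: "e * P1 (-3) \<in> u1" by (intro subsmul[OF ualg_sub] P1_u1) simp
    have p3: "s1^3 * P1 (-3) = 1" "P1 (-3) * s1^3 = 1"
      using P1_add[of 3 "-3"] P1_add[of "-3" 3] by (simp_all add: ip_pos)
    have "u * (e * P1 (-3)) = ei * (s1^3 * (e * P1 (-3)))" unfolding u_def by (simp add: mult.assoc)
    also have "\<dots> = ei * (e * (s1^3 * P1 (-3)))" by (simp only: sce)
    also have "\<dots> = 1" using p3 eie by (simp add: mult.assoc[symmetric])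
    finally have uv: "u * (e * P1 (-3)) = 1" .
    have "(e * P1 (-3)) * u = e * (P1 (-3) * (ei * s1^3))" unfolding u_def by (simp add: mult.assoc)
    also have "\<dots> = e * (ei * (P1 (-3) * s1^3))" by (simp only: scei)
    also have "\<dots> = 1" using p3 eei by (simp add: mult.assoc[symmetric])
    finally have "(e * P1 (-3)) * u = 1" .
    moreover note \<open>u * (e * P1 (-3)) = 1\<close>
    ultimately show ?thesis using uu vu unfolding units_in_def by blast
  qed
  have Win: "u * (s2 * s1^2 * s2) ^ 3 \<in> W" unfolding W_def using uU by blast
  have partA: "s2 * s1^3 * s2^2 * s1^2 * s2^2 \<in> msums [S1, S2, S3, W]"
  proof -
    from yvY obtain y1 y2 y3 where yy: "yv = y1 + (y2 + (y3 + 0))" "y1 \<in> S1" "y2 \<in> S2" "y3 \<in> S3"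
      unfolding Y_def by auto
    have "s2 * s1^3 * s2^2 * s1^2 * s2^2 = y1 + (y2 + (y3 + (u * (s2 * s1^2 * s2) ^ 3 + 0)))"
      unfolding Edec yy by (simp add: algebra_simps)
    then show ?thesis using yy Win by force
  qed
  interpret Ui: h5m a b c d e ei s1 s2 t1 t2 Udp by (rule h5m_inst[OF bimod_Ud])
  note UD = Ui.derivU[OF Ud_leaves]
  have partB: "msums [S1, S2, S3, W] \<subseteq> msums [W, Udp]"
  proof
    fix x assume "x \<in> msums [S1, S2, S3, W]"
    then obtain x1 x2 x3 wv where xx: "x = x1 + (x2 + (x3 + (wv + 0)))" "x1 \<in> S1" "x2 \<in> S2" "x3 \<in> S3" "wv \<in> W"
      by auto
    have "x1 \<in> Udp" using S1_in[OF bimod_Ud UD(2)] xx(2) unfolding S1_def by blast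
    moreover have "x2 \<in> Udp" using S2_in[OF bimod_Ud UD(4)] xx(3) unfolding S2_def by blast
    moreover have "x3 \<in> Udp" using S3_in[OF bimod_Ud UD(1)] xx(4) unfolding S3_def by blast
    ultimately have "x1 + x2 + x3 \<in> Udp" using bimod_sub[OF bimod_Ud] subadd by blast
    moreover have "x = wv + ((x1 + x2 + x3) + 0)" using xx by (simp add: algebra_simps)
    ultimately show "x \<in> msums [W, Udp]" using xx(5) by force
  qed
  show ?thesis unfolding Let_def using partA partB
    by (simp add: S1_def S2_def S3_def W_def)
qed

end

theorem lemma4p5:
  fixes a b c d e ei s1 s2 t1 t2 :: "'a::ring_1"
  assumes central: "\<And>x. a * x = x * a" "\<And>x. b * x = x * b" "\<And>x. c * x = x * c"
      "\<And>x. d * x = x * d" "\<And>x. e * x = x * e"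
    and e_inv: "e * ei = 1" "ei * e = 1"
    and s1_inv: "s1 * t1 = 1" "t1 * s1 = 1"
    and s2_inv: "s2 * t2 = 1" "t2 * s2 = 1"
    and braid: "s1 * s2 * s1 = s2 * s1 * s2"
    and quintic1: "s1 ^ 5 = a * s1 ^ 4 + b * s1 ^ 3 + c * s1 ^ 2 + d * s1 + e"
    and quintic2: "s2 ^ 5 = a * s2 ^ 4 + b * s2 ^ 3 + c * s2 ^ 2 + d * s2 + e"
  shows
    "(let R = scalars a b c d e ei; u1 = ualg R s1; u2 = ualg R s2;
          w = s2 * s1^2 * s2;
          W = {x * w ^ 3 | x. x \<in> units_in u1};
          X = msums [mprod R (mprod R (mprod R (mprod R u1 {s2}) u1) {s2 * s1^3 * s2}) u1,
                     sandw R u1 (s2^2 * s1^3 * s2 * t1 * s2),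
                     mprod R (mprod R (mprod R (mprod R u1 u2) u1) u2) u1,
                     W]
      in s2 * s1^3 * s2^2 * s1^2 * s2^2 \<in> X \<and> X \<subseteq> msums [W, Udprime R s1 s2 t1 t2])"
proof -
  have H: "h5 a b c d e ei s1 s2 t1 t2"
    by (intro h5.intro) (fact central e_inv s1_inv s2_inv braid quintic1 quintic2)+
  show ?thesis by (rule h5.main[OF H])
qed

end
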